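(* Let $C_w$ be a cell of $\mathcal{SG}$ with $C_w\cap V_0=\emptyset$, boundary points $p_i=F_wq_i$. Then for every harmonic function $h$ on $\mathcal{SG}$, $$M_{B(0,0,1)}(h)=h(p_2),\qquad M_{B(0,1,1)}(h)=-\tfrac19h(p_0)+\tfrac59h(p_1)+\tfrac59h(p_2).$$ In other words $T(0,0,1)=P_2=(0,0,1)$ and $T(0,1,1)=Q_0=(-\frac19,\frac59,\frac59)$, a point of the plane $\{a_0+a_1+a_2=1\}$ lying outside the triangle $W$ with vertices $(1,0,0),(0,1,0),(0,0,1)$.
   Context: Let $q_0,q_1,q_2$ be the vertices of an equilateral triangle in $\mathbb{R}^2$ and $F_i(z)=\frac12(z+q_i)$. The Sierpinski gasket $\mathcal{SG}$ is the unique nonempty compact set with $\mathcal{SG}=\bigcup_{i=0}^2F_i(\mathcal{SG})$. For $w\in\{0,1,2\}^m$, $F_w=F_{w_1}\circ\cdots\circ F_{w_m}$ and $C_w=F_w(\mathcal{SG})$ is an $m$-cell. $V_0=\{q_0,q_1,q_2\}$, $V_m=\bigcup_{|w|=m}F_w(V_0)$, $x\sim_my$ means $x\ne y$ lie in a common $F_w(V_0)$, $|w|=m$. $\mu$ is the self-similar probability measure giving mass $3^{-m}$ to each $m$-cell. A continuous $h$ is harmonic if $h(x)=\frac14\sum_{y\sim_mx}h(y)$ for all $m\ge1$, $x\in V_m\setminus V_0$. $M_B(h)=\frac1{\mu(B)}\int_Bh\,d\mu$. For $C_w$ as in the claim: $C_i$ is the unique other cell of the same level containing $p_i$; $\rho$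 is the height of the triangle $F_w(\mathrm{conv}\,V_0)$; for $c_i\in[0,1]$, with $u_i$ the unit vector at $p_i$ along the symmetry axis of the triangle of $C_i$ pointing into $C_i$, $E_i=\{z\in C_i:\langle z-p_i,u_i\rangle\le c_i\rho\}$, and $B(c_0,c_1,c_2)=C_w\cup E_0\cup E_1\cup E_2$ (so $B(0,0,1)=C_w\cup C_2$ and $B(0,1,1)=C_w\cup C_1\cup C_2$ up to null sets). $T(c_0,c_1,c_2)$ denotes the unique $(a_0,a_1,a_2)$ with $M_{B(c_0,c_1,c_2)}(h)=\sum a_ih(p_i)$ for all harmonic $h$. *)

theory Defs
  imports "HOL-Probability.Probability"
begin

text \<open>The plane is modelled as the type complex; the Euclidean inner product is
  the real inner product on complex. The vertices are q 0, q 1, q 2.\<close>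

definition equilateral :: "(nat \<Rightarrow> complex) \<Rightarrow> bool" where
  "equilateral q \<longleftrightarrow> q 0 \<noteq> q 1 \<and> dist (q 0) (q 1) = dist (q 1) (q 2)
      \<and> dist (q 1) (q 2) = dist (q 2) (q 0)"

definition sgF :: "(nat \<Rightarrow> complex) \<Rightarrow> nat \<Rightarrow> complex \<Rightarrow> complex" where
  "sgF q i z = (z + q i) / 2"

definition words :: "nat \<Rightarrow> nat list set" where
  "words m = {w. length w = m \<and> set w \<subseteq> {0,1,2}}"

fun sgFw :: "(nat \<Rightarrow> complex) \<Rightarrow> nat list \<Rightarrow> complex \<Rightarrow> complex" where
  "sgFw q [] = id"
| "sgFw q (i # w) = sgF q i \<circ> sgFw q w"

definition SG :: "(nat \<Rightarrow> complex) \<Rightarrow> complex set" where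
  "SG q = (THE K. K \<noteq> {} \<and> compact K \<and> K = (\<Union>i\<in>{0,1,2}. sgF q i ` K))"

definition cell :: "(nat \<Rightarrow> complex) \<Rightarrow> nat list \<Rightarrow> complex set" where
  "cell q w = sgFw q w ` SG q"

definition V0 :: "(nat \<Rightarrow> complex) \<Rightarrow> complex set" where
  "V0 q = {q 0, q 1, q 2}"

definition Vm :: "(nat \<Rightarrow> complex) \<Rightarrow> nat \<Rightarrow> complex set" where
  "Vm q m = (\<Union>w\<in>words m. sgFw q w ` V0 q)"

definition sg_adj :: "(nat \<Rightarrow> complex) \<Rightarrow> nat \<Rightarrow> complex \<Rightarrow> complex \<Rightarrow> bool" where
  "sg_adj q m x y \<longleftrightarrow> x \<noteq> y \<and> (\<exists>w\<in>words m. x \<in> sgFw q w ` V0 q \<and> y \<in> sgFw q w ` V0 q)"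

definition harmonic :: "(nat \<Rightarrow> complex) \<Rightarrow> (complex \<Rightarrow> real) \<Rightarrow> bool" where
  "harmonic q h \<longleftrightarrow> continuous_on (SG q) h \<and>
     (\<forall>m\<ge>1. \<forall>x \<in> Vm q m - V0 q. h x = (1/4) * (\<Sum>y\<in>{y. sg_adj q m x y}. h y))"

definition sg_measure :: "(nat \<Rightarrow> complex) \<Rightarrow> complex measure \<Rightarrow> bool" where
  "sg_measure q \<mu> \<longleftrightarrow> prob_space \<mu> \<and> sets \<mu> = sets borel \<and>
     (\<forall>m. \<forall>w\<in>words m. measure \<mu> (cell q w) = (1/3) ^ m)"

definition mean_val :: "complex measure \<Rightarrow> complex set \<Rightarrow> (complex \<Rightarrow> real) \<Rightarrow> real" where
  "mean_val \<mu> B h = (1 / measure \<mu> B) * (LINT x:B|\<mu>. h x)"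

definition nbr_word :: "(nat \<Rightarrow> complex) \<Rightarrow> nat list \<Rightarrow> nat \<Rightarrow> nat list" where
  "nbr_word q w i = (THE v. v \<in> words (length w) \<and> v \<noteq> w \<and> sgFw q w (q i) \<in> cell q v)"

definition height :: "(nat \<Rightarrow> complex) \<Rightarrow> nat list \<Rightarrow> real" where
  "height q w = sqrt 3 / 2 * dist (sgFw q w (q 0)) (sgFw q w (q 1))"

text \<open>Unit vector at p_i along the symmetry axis of the triangle of C_i, pointing into C_i
  (i.e. towards the centroid of that triangle).\<close>
definition axis_vec :: "(nat \<Rightarrow> complex) \<Rightarrow> nat list \<Rightarrow> nat \<Rightarrow> complex" where
  "axis_vec q w i = (let v = nbr_word q w i; p = sgFw q w (q i);
      c = (sgFw q v (q 0) + sgFw q v (q 1) + sgFw q v (q 2)) / 3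
    in (c - p) / of_real (norm (c - p)))"

definition Eset :: "(nat \<Rightarrow> complex) \<Rightarrow> nat list \<Rightarrow> nat \<Rightarrow> real \<Rightarrow> complex set" where
  "Eset q w i c = {z \<in> cell q (nbr_word q w i).
      inner (z - sgFw q w (q i)) (axis_vec q w i) \<le> c * height q w}"

definition Bset :: "(nat \<Rightarrow> complex) \<Rightarrow> nat list \<Rightarrow> real \<Rightarrow> real \<Rightarrow> real \<Rightarrow> complex set" where
  "Bset q w c0 c1 c2 = cell q w \<union> Eset q w 0 c0 \<union> Eset q w 1 c1 \<union> Eset q w 2 c2"

end

theory Submission
  imports Defs
begin


definition area :: "complex \<Rightarrow> complex \<Rightarrow> complex \<Rightarrow> real" where
  "area a b c = Im (cnj (b - a) * (c - a))"

lemma area_affine: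
  fixes u v :: real
  assumes "u + v = 1"
  shows "area (of_real u * x + of_real v * y) b c = u * area x b c + v * area y b c"
proof -
  have v: "v = 1 - u" using assms by simp
  show ?thesis unfolding area_def v by (simp add: algebra_simps)
qed

lemma area_mid: "area ((x + y) / 2) b c = (area x b c + area y b c) / 2"
  using area_affine[of "1/2" "1/2" x y b c] by (simp add: field_simps)

lemma dist_sq: "(dist x y)^2 = (Re x - Re y)^2 + (Im x - Im y)^2"
  by (simp add: dist_norm cmod_power2)

locale SGq =
  fixes q :: "nat \<Rightarrow> complex"
  assumes eqq: "equilateral q"
begin

definition D where "D = area (q 0) (q 1) (q 2)"

definition bc :: "nat \<Rightarrow> complex \<Rightarrow> real" where
  "bc k z = (if k = 0 then area z (q 1) (q 2) else if k = 1 then area z (q 2) (q 0)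
       else area z (q 0) (q 1)) / D"

lemma D_nz: "D \<noteq> 0"
proof
  assume D0: "D = 0"
  define a where "a = Re (q 1 - q 0)"
  define b where "b = Im (q 1 - q 0)"
  define c where "c = Re (q 2 - q 0)"
  define e where "e = Im (q 2 - q 0)"
  have d01: "dist (q 0) (q 1) ^2 = a^2 + b^2" unfolding dist_sq a_def b_def by (simp add: power2_eq_square algebra_simps)
  have d12: "dist (q 1) (q 2) ^2 = (c-a)^2 + (e-b)^2" unfolding dist_sq a_def b_def c_def e_def by (simp add: power2_eq_square algebra_simps)
  have d20: "dist (q 2) (q 0) ^2 = c^2 + e^2" unfolding dist_sq c_def e_def by (simp add: power2_eq_square algebra_simps)
  have ne: "q 0 \<noteq> q 1" and e1: "dist (q 0) (q 1) = dist (q 1) (q 2)" and e2: "dist (q 1) (q 2) = dist (q 2) (q 0)"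
    using eqq unfolding equilateral_def by auto
  have N1: "a^2 + b^2 = (c-a)^2 + (e-b)^2" using d01 d12 e1 by metis
  have N2: "c^2+e^2 = (c-a)^2 + (e-b)^2" using d12 d20 e2 by metis
  have im: "a * e - b * c = 0" using D0 unfolding D_def area_def a_def b_def c_def e_def by (simp add: algebra_simps)
  have re: "2 * (a*c + b*e) = a^2+b^2" using N2 by (simp add: power2_eq_square algebra_simps)
  have ce: "c^2+e^2 = a^2+b^2" using N1 N2 by simp
  have id: "(a*c+b*e)^2 + (a*e-b*c)^2 = (a^2+b^2)*(c^2+e^2)" by (simp add: power2_eq_square algebra_simps)
  have "(a^2+b^2)^2 = (2 * (a*c + b*e))^2" using re by simp
  also have "\<dots> = 4 * (a*c + b*e)^2" by (simp add: power2_eq_square algebra_simps)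
  also have "\<dots> = 4 * ((a^2+b^2)*(c^2+e^2))" using id im by simp
  also have "\<dots> = 4 * (a^2+b^2)^2" using ce by (simp add: power2_eq_square)
  finally have "(a^2+b^2)^2 = 4 * (a^2+b^2)^2" .
  then have "a^2+b^2 = 0" by simp
  then have "a = 0" "b = 0" by (simp_all add: sum_power2_eq_zero_iff)
  then have "q 1 = q 0" unfolding a_def b_def by (simp add: complex_eq_iff)
  with ne show False by simp
qed

lemma bc_sum: "bc 0 z + bc 1 z + bc 2 z = 1"
proof -
  have "area z (q 1) (q 2) + area z (q 2) (q 0) + area z (q 0) (q 1) = D"
    unfolding D_def area_def by (simp add: algebra_simps)
  then show ?thesis unfolding bc_def using D_nz by (simp add: field_simps)
qed

lemma bc_rec: "z = of_real (bc 0 z) * q 0 + of_real (bc 1 z) * q 1 + of_real (bc 2 z) * q 2"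
proof -
  have "Re z * D = area z (q 1) (q 2) * Re (q 0) + area z (q 2) (q 0) * Re (q 1) + area z (q 0) (q 1) * Re (q 2)"
       "Im z * D = area z (q 1) (q 2) * Im (q 0) + area z (q 2) (q 0) * Im (q 1) + area z (q 0) (q 1) * Im (q 2)"
    unfolding area_def D_def by (simp_all add: algebra_simps)
  then show ?thesis using D_nz unfolding bc_def by (simp add: complex_eq_iff field_simps)
qed

lemma bc_q: "j < 3 \<Longrightarrow> k < 3 \<Longrightarrow> bc k (q j) = (if k = j then 1 else 0)"
proof -
  assume jk: "j < 3" "k < 3"
  have c1: "area (q 0) (q 1) (q 2) = D" "area (q 1) (q 2) (q 0) = D" "area (q 2) (q 0) (q 1) = D"
    unfolding D_def area_def by (simp_all add: algebra_simps)
  have z: "area x x c = 0" "area x b x = 0" for x b c unfolding area_def by simp_all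
  have e: "bc 0 (q 0) = 1" "bc 1 (q 0) = 0" "bc 2 (q 0) = 0"
          "bc 0 (q 1) = 0" "bc 1 (q 1) = 1" "bc 2 (q 1) = 0"
          "bc 0 (q 2) = 0" "bc 1 (q 2) = 0" "bc 2 (q 2) = 1"
    unfolding bc_def using D_nz c1[simplified] z by simp_all
  have "j = 0 \<or> j = 1 \<or> j = 2" "k = 0 \<or> k = 1 \<or> k = 2" using jk by auto
  then show ?thesis using e by (elim disjE) simp_all
qed

lemma bc_affine: "u + v = 1 \<Longrightarrow> bc k (of_real u * x + of_real v * y) = u * bc k x + v * bc k y"
  unfolding bc_def by (simp add: area_affine add_divide_distrib)

lemma bc_mid: "bc k ((x + y) / 2) = (bc k x + bc k y) / 2"
  unfolding bc_def area_mid by (simp add: add_divide_distrib)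

lemma bc_inj: "bc 0 x = bc 0 y \<Longrightarrow> bc 1 x = bc 1 y \<Longrightarrow> bc 2 x = bc 2 y \<Longrightarrow> x = y"
  by (metis bc_rec)

lemma q_inj: "j < 3 \<Longrightarrow> k < 3 \<Longrightarrow> q j = q k \<Longrightarrow> j = k"
  using bc_q by (metis one_neq_zero)

lemma bc_sgF: "a < 3 \<Longrightarrow> k < 3 \<Longrightarrow> bc k (sgF q a z) = (bc k z + (if k = a then 1 else 0)) / 2"
  unfolding sgF_def by (simp add: bc_mid bc_q)

definition TT where "TT = {z. \<forall>k<3. 0 \<le> bc k z}"

lemma convex_TT: "convex TT"
proof (rule convexI)
  fix x y :: complex and u v :: real
  assume "x \<in> TT" "y \<in> TT" "0 \<le> u" "0 \<le> v" "u + v = 1"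
  then show "u *\<^sub>R x + v *\<^sub>R y \<in> TT"
    unfolding TT_def by (auto simp: scaleR_conv_of_real bc_affine)
qed

lemma hull_TT: "convex hull (V0 q) \<subseteq> TT"
proof (rule hull_minimal)
  show "V0 q \<subseteq> TT" by (auto simp: V0_def TT_def bc_q)
  show "convex TT" by (rule convex_TT)
qed

lemma TT_le1: "z \<in> TT \<Longrightarrow> k < 3 \<Longrightarrow> bc k z \<le> 1"
proof -
  assume "z \<in> TT" "k < 3"
  then have "k \<in> {0,1,2}" "0 \<le> bc 0 z" "0 \<le> bc 1 z" "0 \<le> bc 2 z" unfolding TT_def by auto
  then show ?thesis using bc_sum[of z] by auto
qed

lemma sgFw_append: "sgFw q (w @ v) = sgFw q w \<circ> sgFw q v"
  by (induction w) auto

lemma sgFw_diff: "sgFw q w x - sgFw q w y = (x - y) / 2 ^ length w"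
proof (induction w)
  case Nil then show ?case by simp
next
  case (Cons a w)
  have "sgFw q (a # w) x - sgFw q (a # w) y = (sgFw q w x - sgFw q w y) / 2"
    by (simp add: sgF_def field_simps)
  also have "\<dots> = (x - y) / 2 ^ length (a # w)" using Cons by simp
  finally show ?case .
qed

lemma cmod_pow2: "cmod ((2::complex) ^ n) = 2 ^ n"
  by (simp add: norm_power)

lemma sgFw_dist: "dist (sgFw q w x) (sgFw q w y) = dist x y / 2 ^ length w"
proof -
  have "dist (sgFw q w x) (sgFw q w y) = cmod ((x - y) / 2 ^ length w)" by (simp add: dist_norm sgFw_diff)
  also have "\<dots> = dist x y / 2 ^ length w" by (simp only: norm_divide cmod_pow2 dist_norm)
  finally show ?thesis .
qed

lemma sgFw_inj: "sgFw q w x = sgFw q w y \<Longrightarrow> x = y"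
  by (induction w) (auto simp: sgF_def)

lemma sgFw_affine: "sgFw q w z = sgFw q w 0 + z / 2 ^ length w"
  using sgFw_diff[of w z 0] by (simp add: algebra_simps)

lemma sgFw_cont: "continuous_on S (sgFw q w)"
  by (subst sgFw_affine[abs_def]) (intro continuous_intros, auto)

lemma sgF_cont: "continuous_on S (sgF q i)"
  unfolding sgF_def by (intro continuous_intros, auto)

lemma sgFw_rep: "sgFw q (replicate r a) (q a) = q a"
  by (induction r) (auto simp: sgF_def)

lemma sgF_qq: "sgF q a (q b) = sgF q b (q a)"
  by (simp add: sgF_def add.commute)

lemma words_Cons: "a # w \<in> words (Suc n) \<longleftrightarrow> a \<in> {0,1,2} \<and> w \<in> words n"
  unfolding words_def by auto

lemma words_Nil: "words 0 = {[]}"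
  unfolding words_def by auto

lemma words_Suc: "w \<in> words (Suc n) \<longleftrightarrow> (\<exists>t a. w = t @ [a] \<and> t \<in> words n \<and> a \<in> {0,1,2})"
  unfolding words_def
  by (cases w rule: rev_cases) auto

lemma words_append: "t \<in> words n \<Longrightarrow> v \<in> words m \<Longrightarrow> t @ v \<in> words (n + m)"
  unfolding words_def by auto

lemma rep_words: "a \<in> {0,1,2} \<Longrightarrow> replicate r a \<in> words r"
  unfolding words_def by auto

lemma finite_words: "finite (words n)"
proof -
  have "words n = {w. set w \<subseteq> {0,1,2} \<and> length w = n}" unfolding words_def by auto
  then show ?thesis using finite_lists_length_eq[of "{0::nat,1,2}" n] by simp
qed

lemma sgF_hull: "i \<in> {0,1,2} \<Longrightarrow> z \<in> convex hull (V0 q) \<Longrightarrow> sgF q i z \<in> convex hull (V0 q)"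
proof -
  assume i: "i \<in> {0,1,2}" and z: "z \<in> convex hull (V0 q)"
  have qi: "q i \<in> convex hull (V0 q)" using i by (auto simp: V0_def intro: hull_inc)
  have "(1/2::real) *\<^sub>R z + (1/2::real) *\<^sub>R q i \<in> convex hull (V0 q)"
    by (rule convexD[OF convex_convex_hull z qi]) auto
  then show ?thesis unfolding sgF_def by (simp add: scaleR_conv_of_real field_simps)
qed

lemma sgFw_hull: "set w \<subseteq> {0,1,2} \<Longrightarrow> z \<in> convex hull (V0 q) \<Longrightarrow> sgFw q w z \<in> convex hull (V0 q)"
  by (induction w) (auto intro: sgF_hull)

definition Vs where "Vs = (\<Union>m. Vm q m)"

lemma Vm_hull: "Vm q m \<subseteq> convex hull (V0 q)"
proof
  fix x assume "x \<in> Vm q m"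
  then obtain w y where "w \<in> words m" "y \<in> V0 q" "x = sgFw q w y" unfolding Vm_def by auto
  then show "x \<in> convex hull (V0 q)" using sgFw_hull[of w y] hull_inc[of y "V0 q"] by (auto simp: words_def)
qed

lemma V0_Vm: "V0 q \<subseteq> Vm q m"
proof
  fix x assume "x \<in> V0 q"
  then obtain k where k: "k \<in> {0,1,2}" "x = q k" unfolding V0_def by auto
  then have "x = sgFw q (replicate m k) (q k)" by (simp add: sgFw_rep)
  moreover have "q k \<in> V0 q" using k by (auto simp: V0_def)
  ultimately show "x \<in> Vm q m" unfolding Vm_def using rep_words[OF k(1)] by blast
qed

lemma sgF_Vm: "(\<Union>i\<in>{0,1,2}. sgF q i ` Vm q m) = Vm q (Suc m)"
proof
  show "(\<Union>i\<in>{0,1,2}. sgF q i ` Vm q m) \<subseteq> Vm q (Suc m)"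
  proof (clarify)
    fix i x assume i: "i \<in> {0::nat,1,2}" and x: "x \<in> Vm q m"
    then obtain w y where "w \<in> words m" "y \<in> V0 q" "x = sgFw q w y" unfolding Vm_def by auto
    then show "sgF q i x \<in> Vm q (Suc m)" unfolding Vm_def
      using i by (intro UN_I[of "i # w"]) (auto simp: words_Cons)
  qed
  show "Vm q (Suc m) \<subseteq> (\<Union>i\<in>{0,1,2}. sgF q i ` Vm q m)"
  proof
    fix x assume "x \<in> Vm q (Suc m)"
    then obtain w y where w: "w \<in> words (Suc m)" "y \<in> V0 q" "x = sgFw q w y" unfolding Vm_def by auto
    then obtain a t where at: "w = a # t" by (cases w) (auto simp: words_def)
    then have a: "a \<in> {0,1,2}" and t: "t \<in> words m" using w(1) by (auto simp: words_Cons)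
    have "sgFw q t y \<in> Vm q m" unfolding Vm_def using t w(2) by blast
    moreover have "x = sgF q a (sgFw q t y)" using w(3) at by simp
    ultimately show "x \<in> (\<Union>i\<in>{0,1,2}. sgF q i ` Vm q m)" using a by blast
  qed
qed

lemma closure_image_aff:
  assumes "bounded X"
  shows "sgF q i ` closure X = closure (sgF q i ` X)"
proof
  show "sgF q i ` closure X \<subseteq> closure (sgF q i ` X)"
    by (rule image_closure_subset) (auto simp: sgF_cont closure_subset)
  have "compact (sgF q i ` closure X)"
    using assms by (intro compact_continuous_image sgF_cont) (simp add: compact_closure)
  then show "closure (sgF q i ` X) \<subseteq> sgF q i ` closure X"
    by (intro closure_minimal compact_imp_closed) (auto intro: closure_subset[THEN subsetD])
qed

lemma Vs_bounded: "bounded Vs"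
proof -
  have "Vs \<subseteq> convex hull (V0 q)" using Vm_hull unfolding Vs_def by blast
  moreover have "compact (convex hull (V0 q))" by (rule compact_convex_hull) (simp add: V0_def finite_imp_compact)
  ultimately show ?thesis using bounded_subset compact_imp_bounded by blast
qed

lemma K0_fix: "closure Vs = (\<Union>i\<in>{0,1,2}. sgF q i ` closure Vs)"
proof -
  have "(\<Union>i\<in>{0,1,2}. sgF q i ` closure Vs) = (\<Union>i\<in>{0,1,2}. closure (sgF q i ` Vs))"
    using closure_image_aff[OF Vs_bounded] by simp
  also have "\<dots> = closure (\<Union>i\<in>{0,1,2}. sgF q i ` Vs)" by simp
  also have "(\<Union>i\<in>{0,1,2}. sgF q i ` Vs) = Vs"
  proof -
    have "(\<Union>i\<in>{0,1,2}. sgF q i ` Vs) = (\<Union>m. \<Union>i\<in>{0,1,2}. sgF q i ` Vm q m)"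
      unfolding Vs_def by blast
    also have "\<dots> = (\<Union>m. Vm q (Suc m))" by (simp only: sgF_Vm)
    also have "\<dots> = Vs"
    proof
      show "(\<Union>m. Vm q (Suc m)) \<subseteq> Vs" unfolding Vs_def by blast
      show "Vs \<subseteq> (\<Union>m. Vm q (Suc m))"
      proof
        fix x assume "x \<in> Vs"
        then obtain m where x: "x \<in> Vm q m" unfolding Vs_def by auto
        show "x \<in> (\<Union>m. Vm q (Suc m))"
        proof (cases m)
          case 0
          then have "x \<in> V0 q" using x by (simp add: Vm_def words_Nil)
          then have "x \<in> Vm q (Suc 0)" using V0_Vm by blast
          then show ?thesis by blast
        next
          case (Suc k) then show ?thesis using x by auto
        qed
      qed
    qed
    finally show ?thesis .
  qed
  finally show ?thesis by simp
qed

lemma K0_compact: "compact (closure Vs)"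
  using Vs_bounded by (simp add: compact_closure)

lemma K0_ne: "closure Vs \<noteq> {}"
  using V0_Vm[of 0] closure_subset[of Vs] unfolding Vs_def V0_def by auto

lemma attractor_sub:
  assumes K: "compact K" "K = (\<Union>i\<in>{0,1,2}. sgF q i ` K)"
    and L: "L \<noteq> {}" "compact L" "L = (\<Union>i\<in>{0,1,2}. sgF q i ` L)"
  shows "K \<subseteq> L"
proof -
  have iterK: "\<forall>x\<in>K. \<exists>w\<in>words n. \<exists>y\<in>K. x = sgFw q w y" for n
  proof (induction n)
    case 0 then show ?case by (auto simp: words_Nil)
  next
    case (Suc n)
    show ?case
    proof
      fix x assume "x \<in> K"
      then obtain i y where i: "i \<in> {0,1,2}" "y \<in> K" "x = sgF q i y" using K(2) by blast
      then obtain w z where "w \<in> words n" "z \<in> K" "y = sgFw q w z" using Suc by blast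
      then show "\<exists>w\<in>words (Suc n). \<exists>y\<in>K. x = sgFw q w y"
        using i by (intro bexI[of _ "i # w"]) (auto simp: words_Cons)
    qed
  qed
  have invL: "set w \<subseteq> {0,1,2} \<Longrightarrow> sgFw q w ` L \<subseteq> L" for w
  proof (induction w)
    case Nil then show ?case by simp
  next
    case (Cons a w)
    then have "sgF q a ` L \<subseteq> L" using L(3) by auto
    then show ?case using Cons by auto
  qed
  obtain R where R: "\<forall>x\<in>K \<union> L. \<forall>y\<in>K \<union> L. dist x y \<le> R"
    using bounded_two_points[of "K \<union> L"] K(1) L(2) by (auto dest!: compact_imp_bounded)
  obtain z where z: "z \<in> L" using L(1) by auto
  show ?thesis
  proof
    fix x assume x: "x \<in> K"
    have "x \<in> closure L" unfolding closure_approachable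
    proof (intro allI impI)
      fix e :: real assume e: "e > 0"
      have R0: "0 \<le> R" using R x by (metis UnCI dist_self)
      obtain n where n: "(1/2::real) ^ n < e / (R + 1)"
        using real_arch_pow_inv[of "e / (R + 1)" "1/2"] e R0 by auto
      obtain w y where w: "w \<in> words n" "y \<in> K" "x = sgFw q w y" using iterK x by blast
      have "sgFw q w z \<in> L" using invL[of w] w(1) z unfolding words_def by auto
      moreover have "dist (sgFw q w z) x < e"
      proof -
        have "dist (sgFw q w z) x = dist z y / 2 ^ n"
          using w by (simp add: sgFw_dist words_def)
        also have "\<dots> \<le> R * (1/2)^n" using R z w(2) by (simp add: power_one_over divide_right_mono)
        also have "\<dots> \<le> (R + 1) * (1/2)^n" by simp
        also have "\<dots> < (R + 1) * (e / (R + 1))" using n R0 by (intro mult_strict_left_mono) auto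
        also have "\<dots> = e" using R0 by simp
        finally show ?thesis .
      qed
      ultimately show "\<exists>y\<in>L. dist y x < e" by blast
    qed
    then show "x \<in> L" using L(2) by (simp add: compact_imp_closed closure_closed)
  qed
qed

lemma SG_eq: "SG q = closure Vs"
  unfolding SG_def
proof (rule the_equality)
  show "closure Vs \<noteq> {} \<and> compact (closure Vs) \<and> closure Vs = (\<Union>i\<in>{0, 1, 2}. sgF q i ` closure Vs)"
    using K0_ne K0_compact K0_fix by blast
  fix K assume "K \<noteq> {} \<and> compact K \<and> K = (\<Union>i\<in>{0, 1, 2}. sgF q i ` K)"
  then show "K = closure Vs"
    using attractor_sub[of K "closure Vs"] attractor_sub[of "closure Vs" K] K0_ne K0_compact K0_fix
    by blast
qed

lemma SG_fix: "SG q = (\<Union>i\<in>{0,1,2}. sgF q i ` SG q)"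
  using K0_fix SG_eq by simp

lemma SG_compact: "compact (SG q)"
  using K0_compact SG_eq by simp

lemma V0_SG: "V0 q \<subseteq> SG q"
  using V0_Vm[of 0] closure_subset[of Vs] unfolding SG_eq Vs_def by auto

lemma q_SG: "k \<in> {0,1,2} \<Longrightarrow> q k \<in> SG q"
  using V0_SG unfolding V0_def by auto

lemma SG_hull: "SG q \<subseteq> convex hull (V0 q)"
proof -
  have "closed (convex hull (V0 q))"
    by (rule compact_imp_closed, rule compact_convex_hull) (simp add: V0_def finite_imp_compact)
  moreover have "Vs \<subseteq> convex hull (V0 q)" using Vm_hull unfolding Vs_def by blast
  ultimately show ?thesis unfolding SG_eq by (rule closure_minimal[rotated])
qed

lemma SG_TT: "SG q \<subseteq> TT"
  using SG_hull hull_TT by auto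

end


context SGq begin

lemma sgF_inj: "sgF q a x = sgF q a y \<Longrightarrow> x = y"
  unfolding sgF_def by simp

lemma sgF_SG: "i \<in> {0,1,2} \<Longrightarrow> sgF q i ` SG q \<subseteq> SG q"
  using SG_fix by blast

lemma sgFw_SG: "set w \<subseteq> {0,1,2} \<Longrightarrow> sgFw q w ` SG q \<subseteq> SG q"
proof (induction w)
  case Nil then show ?case by simp
next
  case (Cons a w)
  then show ?case using sgF_SG[of a] by (auto simp: image_comp[symmetric])
qed

lemma cell_SG: "set w \<subseteq> {0,1,2} \<Longrightarrow> cell q w \<subseteq> SG q"
  unfolding cell_def by (rule sgFw_SG)

lemma cell_Nil: "cell q [] = SG q"
  unfolding cell_def by simp

lemma cell_Cons: "cell q (a # w) = sgF q a ` cell q w"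
  unfolding cell_def by (simp add: image_comp)

lemma cell_split: "cell q w = (\<Union>a\<in>{0,1,2}. cell q (w @ [a]))"
proof -
  have "cell q w = sgFw q w ` (\<Union>i\<in>{0,1,2}. sgF q i ` SG q)" unfolding cell_def using SG_fix by simp
  also have "\<dots> = (\<Union>a\<in>{0,1,2}. cell q (w @ [a]))"
    unfolding cell_def sgFw_append by (auto simp: image_comp)
  finally show ?thesis .
qed

lemma SG_cover: "x \<in> SG q \<Longrightarrow> \<exists>w\<in>words n. x \<in> cell q w"
proof (induction n arbitrary: x)
  case 0 then show ?case by (auto simp: words_Nil cell_Nil)
next
  case (Suc n)
  then obtain i y where i: "i \<in> {0,1,2}" "y \<in> SG q" "x = sgF q i y" using SG_fix by blast
  then obtain w where "w \<in> words n" "y \<in> cell q w" using Suc by blast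
  then show ?case using i by (intro bexI[of _ "i # w"]) (auto simp: words_Cons cell_Cons)
qed

lemma q_cell: "k \<in> {0,1,2} \<Longrightarrow> sgFw q w (q k) \<in> cell q w"
  unfolding cell_def using q_SG by auto

lemma TT_sgF: "z \<in> TT \<Longrightarrow> a < 3 \<Longrightarrow> sgF q a z \<in> TT"
  unfolding TT_def by (auto simp: bc_sgF)

lemma third:
  fixes a b :: nat
  assumes "a \<in> {0,1,2}" "b \<in> {0,1,2}" "a \<noteq> b"
  obtains c where "c \<in> {0,1,2}" "c \<noteq> a" "c \<noteq> b" "\<And>k. k \<in> {0,1,2} \<Longrightarrow> k = a \<or> k = b \<or> k = c"
proof -
  from assms have "(a = 0 \<and> b = 1) \<or> (a = 0 \<and> b = 2) \<or> (a = 1 \<and> b = 0) \<or> (a = 1 \<and> b = 2) \<or> (a = 2 \<and> b = 0) \<or> (a = 2 \<and> b = 1)"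
    by auto
  then show thesis
  proof (elim disjE conjE)
    assume "a = 0" "b = 1" then show thesis by (intro that[of 2]) auto
  next
    assume "a = 0" "b = 2" then show thesis by (intro that[of 1]) auto
  next
    assume "a = 1" "b = 0" then show thesis by (intro that[of 2]) auto
  next
    assume "a = 1" "b = 2" then show thesis by (intro that[of 0]) auto
  next
    assume "a = 2" "b = 0" then show thesis by (intro that[of 1]) auto
  next
    assume "a = 2" "b = 1" then show thesis by (intro that[of 0]) auto
  qed
qed

lemma bc_sum3:
  assumes "a \<in> {0,1,2}" "b \<in> {0,1,2}" "c \<in> {0,1,2}" "a \<noteq> b" "a \<noteq> c" "b \<noteq> c"
  shows "bc a z + bc b z + bc c z = 1"
proof -
  have "{a,b,c} = {0::nat,1,2}"
  proof -
    have "{a,b,c} \<subseteq> {0::nat,1,2}" using assms by auto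
    moreover have "card {a,b,c} = 3" using assms by auto
    ultimately show ?thesis by (intro card_subset_eq) auto
  qed
  then have "(\<Sum>k\<in>{a,b,c}. bc k z) = (\<Sum>k\<in>{0::nat,1,2}. bc k z)" by simp
  then show ?thesis using assms bc_sum[of z] by (simp add: add.assoc)
qed

lemma bc_eq_all: "(\<And>k. k \<in> {0,1,2} \<Longrightarrow> bc k x = bc k y) \<Longrightarrow> x = y"
  by (rule bc_inj) auto

lemma TT_nn: "z \<in> TT \<Longrightarrow> k \<in> {0,1,2} \<Longrightarrow> 0 \<le> bc k z"
  unfolding TT_def by auto

lemma bc_eq_q: "z \<in> TT \<Longrightarrow> b \<in> {0,1,2} \<Longrightarrow> bc b z = 1 \<Longrightarrow> z = q b"
proof -
  assume z: "z \<in> TT" and b: "b \<in> {0,1,2}" and one: "bc b z = 1"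
  show ?thesis
  proof (rule bc_eq_all)
    fix k :: nat assume k: "k \<in> {0,1,2}"
    show "bc k z = bc k (q b)"
    proof (cases "k = b")
      case True then show ?thesis using one b by (auto simp: bc_q)
    next
      case False
      obtain c where c: "c \<in> {0,1,2}" "c \<noteq> b" "c \<noteq> k" using third[OF b k] False by metis
      have "bc b z + bc k z + bc c z = 1" using bc_sum3[OF b k c(1)] False c by auto
      moreover have "0 \<le> bc k z" "0 \<le> bc c z" using TT_nn[OF z] k c by auto
      ultimately have "bc k z = 0" using one by linarith
      then show ?thesis using False b k by (auto simp: bc_q)
    qed
  qed
qed

lemma G1:
  assumes a: "a \<in> {0,1,2}" and b: "b \<in> {0,1,2}" and ab: "a \<noteq> b"
    and x: "x \<in> sgF q a ` SG q" "x \<in> sgF q b ` SG q"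
  shows "x = sgF q a (q b)"
proof -
  obtain y y' where y: "y \<in> TT" "x = sgF q a y" and y': "y' \<in> TT" "x = sgF q b y'"
    using x SG_TT by blast
  obtain c where c: "c \<in> {0,1,2}" "c \<noteq> a" "c \<noteq> b" and all: "\<And>k. k \<in> {0,1,2} \<Longrightarrow> k = a \<or> k = b \<or> k = c"
    using third[OF a b ab] by metis
  have xa: "2 * bc a x = bc a y + 1" using y a by (auto simp: bc_sgF)
  have xb: "2 * bc b x = bc b y' + 1" using y' b by (auto simp: bc_sgF)
  have xc: "2 * bc c x = bc c y" using y a c by (auto simp: bc_sgF)
  have nn: "0 \<le> bc a y" "0 \<le> bc b y'" "0 \<le> bc c y" using TT_nn y y' a b c by auto
  have s: "bc a x + bc b x + bc c x = 1" using bc_sum3[OF a b c(1)] ab c by auto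
  have r1: "bc a x = 1/2" using xa xb xc nn s by linarith
  have r2: "bc b x = 1/2" using xa xb xc nn s by linarith
  have r3: "bc c x = 0" using xa xb xc nn s by linarith
  note r = r1 r2 r3
  have p: "bc a (sgF q a (q b)) = 1/2" "bc b (sgF q a (q b)) = 1/2" "bc c (sgF q a (q b)) = 0"
    using a b c ab by (auto simp: bc_sgF bc_q)
  show ?thesis
  proof (rule bc_eq_all)
    fix k :: nat assume "k \<in> {0,1,2}"
    then show "bc k x = bc k (sgF q a (q b))" using all r p by metis
  qed
qed

lemma G3:
  assumes a: "a \<in> {0,1,2}" and b: "b \<in> {0,1,2}" and z: "z \<in> SG q" and e: "sgF q a z = q b"
  shows "a = b \<and> z = q b"
proof -
  have zT: "z \<in> TT" using z SG_TT by auto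
  have "bc b (sgF q a z) = 1" using e b by (auto simp: bc_q)
  then have h: "bc b z + (if b = a then 1 else 0) = 2" using a b by (auto simp: bc_sgF)
  have "bc b z \<le> 1" using TT_le1[OF zT] b by auto
  then have ab: "a = b" using h by (auto split: if_splits)
  then have "bc b z = 1" using h by simp
  then show ?thesis using ab bc_eq_q zT b by auto
qed

lemma G2:
  "set w \<subseteq> {0,1,2} \<Longrightarrow> z \<in> SG q \<Longrightarrow> b \<in> {0,1,2} \<Longrightarrow> sgFw q w z = q b
    \<Longrightarrow> w = replicate (length w) b \<and> z = q b"
proof (induction w)
  case Nil then show ?case by simp
next
  case (Cons a w)
  have "sgFw q w z \<in> SG q" using Cons.prems sgFw_SG[of w] by auto
  then have "a = b \<and> sgFw q w z = q b" using G3[of a b "sgFw q w z"] Cons.prems by auto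
  then show ?case using Cons by auto
qed

lemma mainL:
  "w \<in> words n \<Longrightarrow> v \<in> words n \<Longrightarrow> i \<in> {0,1,2} \<Longrightarrow> sgFw q w (q i) \<in> cell q v \<Longrightarrow>
    v = w \<or> (\<exists>u j r. j \<in> {0,1,2} \<and> j \<noteq> i \<and> w = u @ j # replicate r i \<and> v = u @ i # replicate r j)"
proof (induction w arbitrary: n v)
  case Nil then show ?case by (simp add: words_def)
next
  case (Cons a w)
  obtain n' where n: "n = Suc n'" using Cons.prems(1) by (cases n) (auto simp: words_def)
  obtain b v' where v: "v = b # v'" using Cons.prems(2) n by (cases v) (auto simp: words_def)
  have a: "a \<in> {0,1,2}" and w: "w \<in> words n'" using Cons.prems(1) n by (auto simp: words_Cons)
  have b: "b \<in> {0,1,2}" and v': "v' \<in> words n'" using Cons.prems(2) n v by (auto simp: words_Cons)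
  have x: "sgF q a (sgFw q w (q i)) \<in> sgF q b ` cell q v'" using Cons.prems(4) v by (simp add: cell_Cons)
  show ?case
  proof (cases "a = b")
    case True
    then have "sgFw q w (q i) \<in> cell q v'" using x by (auto dest: sgF_inj)
    then have "v' = w \<or> (\<exists>u j r. j \<in> {0,1,2} \<and> j \<noteq> i \<and> w = u @ j # replicate r i \<and> v' = u @ i # replicate r j)"
      using Cons.IH[OF w v' Cons.prems(3)] by blast
    then show ?thesis
    proof
      assume "v' = w" then show ?thesis using True v by simp
    next
      assume "\<exists>u j r. j \<in> {0,1,2} \<and> j \<noteq> i \<and> w = u @ j # replicate r i \<and> v' = u @ i # replicate r j"
      then obtain u j r where "j \<in> {0,1,2}" "j \<noteq> i" "w = u @ j # replicate r i" "v' = u @ i # replicate r j" by blast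
      then show ?thesis using True v by (intro disjI2 exI[of _ "a # u"] exI[of _ j] exI[of _ r]) auto
    qed
  next
    case False
    have wS: "set w \<subseteq> {0,1,2}" and vS: "set v' \<subseteq> {0,1,2}" using w v' by (auto simp: words_def)
    have i: "q i \<in> SG q" using Cons.prems(3) q_SG by auto
    have m1: "sgF q a (sgFw q w (q i)) \<in> sgF q a ` SG q" using sgFw_SG[OF wS] i by auto
    have m2: "sgF q a (sgFw q w (q i)) \<in> sgF q b ` SG q" using x cell_SG[OF vS] by auto
    have xe: "sgF q a (sgFw q w (q i)) = sgF q a (q b)" using G1[OF a b False m1 m2] .
    then have "sgFw q w (q i) = q b" by (rule sgF_inj)
    then have wr: "w = replicate (length w) b" and ib: "q i = q b"
      using G2[OF wS i b] by auto
    have ib': "i = b" using ib Cons.prems(3) b q_inj[of i b] by auto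
    obtain y where y: "y \<in> cell q v'" "sgF q b y = sgF q a (q b)" using x xe by auto
    then have "sgF q b y = sgF q b (q a)" using sgF_qq[of b a] by simp
    then have "y = q a" by (rule sgF_inj)
    then obtain z where z: "z \<in> SG q" "sgFw q v' z = q a" using y(1) unfolding cell_def by auto
    then have vr: "v' = replicate (length v') a" using G2[OF vS z(1) a] by auto
    have "length v' = length w" using v' w by (simp add: words_def)
    then show ?thesis using wr vr ib' False v a
      by (intro disjI2 exI[of _ "[]"] exI[of _ a] exI[of _ "length w"]) auto
  qed
qed

lemma decomp:
  "set w \<subseteq> {0,1,2} \<Longrightarrow> w \<noteq> replicate (length w) i \<Longrightarrow>
    \<exists>u j r. j \<in> {0,1,2} \<and> j \<noteq> i \<and> w = u @ j # replicate r i"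
proof (induction w rule: rev_induct)
  case Nil then show ?case by simp
next
  case (snoc a w)
  show ?case
  proof (cases "a = i")
    case False
    then show ?thesis using snoc.prems by (intro exI[of _ w] exI[of _ a] exI[of _ 0]) auto
  next
    case True
    have "w \<noteq> replicate (length w) i"
    proof
      assume A: "w = replicate (length w) i"
      have "w @ [a] = replicate (length w) i @ [a]" using A by (rule arg_cong[where f="\<lambda>x. x @ [a]"])
      also have "\<dots> = replicate (Suc (length w)) i" using True by (simp add: replicate_append_same)
      finally have "w @ [a] = replicate (length (w @ [a])) i" by simp
      then show False using snoc.prems(2) by blast
    qed
    moreover have "set w \<subseteq> {0,1,2}" using snoc.prems(1) by simp
    ultimately obtain u j r where "j \<in> {0,1,2}" "j \<noteq> i" "w = u @ j # replicate r i" using snoc.IH by blast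
    then show ?thesis using True
      by (intro exI[of _ u] exI[of _ j] exI[of _ "Suc r"]) (simp add: replicate_append_same)
  qed
qed

lemma rep_prefix_unique:
  "j \<noteq> i \<Longrightarrow> j' \<noteq> i \<Longrightarrow> replicate r i @ j # x = replicate r' i @ j' # x' \<Longrightarrow> r = r' \<and> j = j' \<and> x = x'"
proof (induction r arbitrary: r')
  case 0
  show ?case
  proof (cases r')
    case 0 then show ?thesis using "0.prems" by simp
  next
    case (Suc k) then show ?thesis using "0.prems" by simp
  qed
next
  case (Suc r)
  show ?case
  proof (cases r')
    case 0 then show ?thesis using Suc.prems by simp
  next
    case (Suc k)
    then have "replicate r i @ j # x = replicate k i @ j' # x'" using Suc.prems(3) by simp
    then show ?thesis using Suc.IH[OF Suc.prems(1,2)] \<open>r' = Suc k\<close> by simp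
  qed
qed

lemma decomp_unique:
  assumes "j \<noteq> i" "j' \<noteq> i" "u @ j # replicate r i = u' @ j' # replicate r' i"
  shows "u = u' \<and> j = j' \<and> r = r'"
proof -
  have "rev (u @ j # replicate r i) = rev (u' @ j' # replicate r' i)" using assms(3) by simp
  then have "replicate r i @ j # rev u = replicate r' i @ j' # rev u'" by simp
  then have "r = r' \<and> j = j' \<and> rev u = rev u'" using rep_prefix_unique[OF assms(1,2)] by blast
  then show ?thesis by simp
qed

lemma nbr_word_eq:
  assumes w: "w \<in> words (length w)" and i: "i \<in> {0,1,2}" and j: "j \<in> {0,1,2}" and ji: "j \<noteq> i"
    and wd: "w = u @ j # replicate r i"
  shows "nbr_word q w i = u @ i # replicate r j"
  unfolding nbr_word_def
proof (rule the_equality)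
  have uS: "set u \<subseteq> {0,1,2}" using w wd by (auto simp: words_def)
  have pe: "sgFw q w (q i) = sgFw q (u @ i # replicate r j) (q j)"
    using wd by (simp add: sgFw_append sgFw_rep sgF_qq)
  have s1: "u @ i # replicate r j \<in> words (length w)"
    unfolding words_def using uS i j wd by auto
  have s2: "u @ i # replicate r j \<noteq> w" using ji wd by simp
  have s3: "sgFw q w (q i) \<in> cell q (u @ i # replicate r j)" using pe q_cell[OF j] by simp
  show "u @ i # replicate r j \<in> words (length w) \<and> u @ i # replicate r j \<noteq> w \<and>
        sgFw q w (q i) \<in> cell q (u @ i # replicate r j)" using s1 s2 s3 by blast
  fix v assume v: "v \<in> words (length w) \<and> v \<noteq> w \<and> sgFw q w (q i) \<in> cell q v"
  then obtain u' j' r' where o: "j' \<in> {0,1,2}" "j' \<noteq> i" "w = u' @ j' # replicate r' i" "v = u' @ i # replicate r' j'"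
    using mainL[OF w _ i] by blast
  have "u @ j # replicate r i = u' @ j' # replicate r' i" using o(3) wd by simp
  then have "u = u' \<and> j = j' \<and> r = r'" using decomp_unique[of j i j' u r u' r'] ji o(2) by blast
  then show "v = u @ i # replicate r j" using o(4) by simp
qed

lemma cells_inter:
  "v \<in> words n \<Longrightarrow> v' \<in> words n \<Longrightarrow> v \<noteq> v' \<Longrightarrow> \<exists>p. cell q v \<inter> cell q v' \<subseteq> {p}"
proof (induction v arbitrary: n v')
  case Nil then show ?case by (simp add: words_def)
next
  case (Cons a v)
  obtain n' where n: "n = Suc n'" using Cons.prems(1) by (cases n) (auto simp: words_def)
  obtain b w where v': "v' = b # w" using Cons.prems(2) n by (cases v') (auto simp: words_def)
  have a: "a \<in> {0,1,2}" and v: "v \<in> words n'" using Cons.prems(1) n by (auto simp: words_Cons)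
  have b: "b \<in> {0,1,2}" and w: "w \<in> words n'" using Cons.prems(2) n v' by (auto simp: words_Cons)
  show ?case
  proof (cases "a = b")
    case True
    then have "v \<noteq> w" using Cons.prems(3) v' by simp
    then obtain p where p: "cell q v \<inter> cell q w \<subseteq> {p}" using Cons.IH[OF v w] by blast
    have "cell q (a # v) \<inter> cell q v' \<subseteq> {sgF q a p}"
      using p True v' by (auto simp: cell_Cons dest: sgF_inj)
    then show ?thesis by blast
  next
    case False
    have "cell q (a # v) \<inter> cell q v' \<subseteq> {sgF q a (q b)}"
    proof
      fix x assume x: "x \<in> cell q (a # v) \<inter> cell q v'"
      have "x \<in> sgF q a ` SG q" using x cell_SG[of v] v by (auto simp: cell_Cons words_def)
      moreover have "x \<in> sgF q b ` SG q" using x cell_SG[of w] w v' by (auto simp: cell_Cons words_def)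
      ultimately show "x \<in> {sgF q a (q b)}" using G1[OF a b False] by auto
    qed
    then show ?thesis by blast
  qed
qed

end


context SGq begin

definition ss where "ss = dist (q 0) (q 1)"

lemma ss_pos: "ss > 0"
  using eqq unfolding ss_def equilateral_def by auto

lemma sides: "a \<in> {0,1,2} \<Longrightarrow> b \<in> {0,1,2} \<Longrightarrow> a \<noteq> b \<Longrightarrow> norm (q a - q b) = ss"
proof -
  assume a: "a \<in> {0,1,2}" and b: "b \<in> {0,1,2}" and ab: "a \<noteq> b"
  have e: "dist (q 0) (q 1) = ss" "dist (q 1) (q 2) = ss" "dist (q 2) (q 0) = ss"
    using eqq unfolding ss_def equilateral_def by auto
  have e': "dist (q 1) (q 0) = ss" "dist (q 2) (q 1) = ss" "dist (q 0) (q 2) = ss"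
    using e by (simp_all add: dist_commute)
  have "dist (q a) (q b) = ss" using a b ab e e' by auto
  then show ?thesis by (simp add: dist_norm)
qed

definition GG where "GG = (q 0 + q 1 + q 2) / 3"

lemma sum3_q:
  assumes "a \<in> {0,1,2}" "b \<in> {0,1,2}" "c \<in> {0,1,2}" "a \<noteq> b" "a \<noteq> c" "b \<noteq> c"
  shows "q a + q b + q c = q 0 + q 1 + q 2"
proof -
  have "{a,b,c} = {0::nat,1,2}"
  proof -
    have "{a,b,c} \<subseteq> {0::nat,1,2}" using assms by auto
    moreover have "card {a,b,c} = 3" using assms by auto
    ultimately show ?thesis by (intro card_subset_eq) auto
  qed
  then have "(\<Sum>k\<in>{a,b,c}. q k) = (\<Sum>k\<in>{0::nat,1,2}. q k)" by simp
  then show ?thesis using assms by (simp add: add.assoc)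
qed

lemma ip_q:
  assumes j: "j \<in> {0,1,2}" and k: "k \<in> {0,1,2}"
  shows "inner (q k - q j) (GG - q j) = (if k = j then 0 else ss^2 / 2)"
proof (cases "k = j")
  case True then show ?thesis by simp
next
  case False
  obtain c where c: "c \<in> {0,1,2}" "c \<noteq> j" "c \<noteq> k" using third[OF j k] False by metis
  have s3: "q k + q j + q c = q 0 + q 1 + q 2" using sum3_q[OF k j c(1)] False c by auto
  have G0: "GG = (q k + q j + q c) / 3" unfolding GG_def s3 ..
  have G: "GG - q j = (1/3) *\<^sub>R ((q k - q j) + (q c - q j))"
    unfolding G0 by (simp add: scaleR_conv_of_real field_simps)
  have n1: "norm (q k - q j) = ss" using sides k j False by auto
  have n2: "norm (q c - q j) = ss" using sides c j by auto
  have n3: "norm ((q k - q j) - (q c - q j)) = ss" using sides[OF k c(1)] c by auto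
  have i2: "inner (q k - q j) (q c - q j) = ss^2 / 2"
    using dot_norm_neg[of "q k - q j" "q c - q j"] n1 n2 n3 by simp
  have "inner (q k - q j) (GG - q j) = (1/3) * (inner (q k - q j) (q k - q j) + inner (q k - q j) (q c - q j))"
    unfolding G inner_scaleR_right inner_add_right by simp
  also have "\<dots> = (1/3) * (ss^2 + ss^2/2)" using i2 n1 by (simp add: power2_norm_eq_inner[symmetric])
  also have "\<dots> = ss^2/2" by simp
  finally show ?thesis using False by simp
qed

lemma ip_y:
  assumes j: "j \<in> {0,1,2}"
  shows "inner (y - q j) (GG - q j) = (1 - bc j y) * ss^2 / 2"
proof -
  have "y - q j = bc 0 y *\<^sub>R (q 0 - q j) + bc 1 y *\<^sub>R (q 1 - q j) + bc 2 y *\<^sub>R (q 2 - q j)"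
  proof -
    have "y = bc 0 y *\<^sub>R q 0 + bc 1 y *\<^sub>R q 1 + bc 2 y *\<^sub>R q 2"
      using bc_rec[of y] by (simp add: scaleR_conv_of_real)
    moreover have "q j = (bc 0 y + bc 1 y + bc 2 y) *\<^sub>R q j" using bc_sum[of y] by simp
    ultimately show ?thesis by (simp add: algebra_simps)
  qed
  then have "inner (y - q j) (GG - q j) = bc 0 y * inner (q 0 - q j) (GG - q j)
      + bc 1 y * inner (q 1 - q j) (GG - q j) + bc 2 y * inner (q 2 - q j) (GG - q j)"
    by (simp add: inner_add_left)
  also have "\<dots> = (1 - bc j y) * ss^2 / 2"
  proof -
    have b0: "bc 0 y = 1 - bc 1 y - bc 2 y" using bc_sum[of y] by simp
    have f: "inner (q 0 - q j) (GG - q j) = (if 0 = j then 0 else ss^2 / 2)"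
        "inner (q 1 - q j) (GG - q j) = (if 1 = j then 0 else ss^2 / 2)"
        "inner (q 2 - q j) (GG - q j) = (if 2 = j then 0 else ss^2 / 2)"
      using ip_q[OF j, of 0] ip_q[OF j, of 1] ip_q[OF j, of 2] by simp_all
    from j have "j = 0 \<or> j = 1 \<or> j = 2" by simp
    then show ?thesis
    proof (elim disjE)
      assume jk: "j = 0"
      have "bc 0 y * inner (q 0 - q j) (GG - q j) + bc 1 y * inner (q 1 - q j) (GG - q j) + bc 2 y * inner (q 2 - q j) (GG - q j)
          = bc 0 y * (if 0 = j then 0 else ss^2 / 2) + bc 1 y * (if 1 = j then 0 else ss^2 / 2) + bc 2 y * (if 2 = j then 0 else ss^2 / 2)"
        unfolding f by (rule refl)
      also have "\<dots> = (1 - bc j y) * ss^2 / 2" unfolding jk b0 by (simp add: algebra_simps)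
      finally show ?thesis .
    next
      assume jk: "j = 1"
      have "bc 0 y * inner (q 0 - q j) (GG - q j) + bc 1 y * inner (q 1 - q j) (GG - q j) + bc 2 y * inner (q 2 - q j) (GG - q j)
          = bc 0 y * (if 0 = j then 0 else ss^2 / 2) + bc 1 y * (if 1 = j then 0 else ss^2 / 2) + bc 2 y * (if 2 = j then 0 else ss^2 / 2)"
        unfolding f by (rule refl)
      also have "\<dots> = (1 - bc j y) * ss^2 / 2" unfolding jk b0 by (simp add: algebra_simps)
      finally show ?thesis .
    next
      assume jk: "j = 2"
      have "bc 0 y * inner (q 0 - q j) (GG - q j) + bc 1 y * inner (q 1 - q j) (GG - q j) + bc 2 y * inner (q 2 - q j) (GG - q j)
          = bc 0 y * (if 0 = j then 0 else ss^2 / 2) + bc 1 y * (if 1 = j then 0 else ss^2 / 2) + bc 2 y * (if 2 = j then 0 else ss^2 / 2)"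
        unfolding f by (rule refl)
      also have "\<dots> = (1 - bc j y) * ss^2 / 2" unfolding jk b0 by (simp add: algebra_simps)
      finally show ?thesis .
    qed
  qed
  finally show ?thesis .
qed

lemma bc_GG: "k \<in> {0,1,2} \<Longrightarrow> bc k GG = 1/3"
proof -
  assume k: "k \<in> {0,1,2}"
  have GGe: "GG = of_real (1/3) * q 0 + of_real (2/3) * ((q 1 + q 2) / 2)" unfolding GG_def by (simp add: field_simps)
  have "bc k GG = 1/3 * bc k (q 0) + 2/3 * bc k ((q 1 + q 2) / 2)"
    unfolding GGe by (rule bc_affine) simp
  then have "bc k GG = 1/3 * bc k (q 0) + 2/3 * ((bc k (q 1) + bc k (q 2)) / 2)"
    by (simp only: bc_mid)
  then show ?thesis using k by (auto simp: bc_q)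
qed

lemma norm_GG: "j \<in> {0,1,2} \<Longrightarrow> sqrt 3 * norm (GG - q j) = ss"
proof -
  assume j: "j \<in> {0,1,2}"
  have "(norm (GG - q j))^2 = inner (GG - q j) (GG - q j)" by (rule power2_norm_eq_inner)
  also have "\<dots> = (1 - bc j GG) * ss^2 / 2" by (rule ip_y[OF j])
  also have "\<dots> = ss^2 / 3" unfolding bc_GG[OF j] by simp
  finally have n2: "(norm (GG - q j))^2 = ss^2 / 3" .
  have "(sqrt 3 * norm (GG - q j))^2 = 3 * (norm (GG - q j))^2" by (simp add: power_mult_distrib)
  also have "\<dots> = ss^2" unfolding n2 by simp
  finally have sq: "(sqrt 3 * norm (GG - q j))^2 = ss^2" .
  show ?thesis by (rule power2_eq_imp_eq[OF sq]) (use ss_pos in auto)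
qed

lemma sgFw_diffR: "sgFw q w x - sgFw q w y = (1 / 2 ^ length w) *\<^sub>R (x - y)"
  by (simp add: sgFw_diff scaleR_conv_of_real divide_inverse mult.commute)

lemma sgFw_centroid: "(sgFw q w (q 0) + sgFw q w (q 1) + sgFw q w (q 2)) / 3 = sgFw q w GG"
  unfolding GG_def
  by (subst (1 2 3 4) sgFw_affine) (simp add: field_simps)

lemma Eset_geom:
  assumes w: "w \<in> words (length w)" and i: "i \<in> {0,1,2}" and j: "j \<in> {0,1,2}" and ji: "j \<noteq> i"
    and wd: "w = u @ j # replicate r i"
  shows "Eset q w i 0 \<subseteq> {sgFw q w (q i)}" and "Eset q w i 1 = cell q (u @ i # replicate r j)"
proof -
  define nb where "nb = u @ i # replicate r j"
  have nbw: "nbr_word q w i = nb" using nbr_word_eq[OF assms] nb_def by simp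
  define m where "m = length w"
  have lnb: "length nb = m" unfolding nb_def m_def wd by simp
  define p where "p = sgFw q w (q i)"
  have pe: "p = sgFw q nb (q j)"
    unfolding p_def nb_def using wd by (simp add: sgFw_append sgFw_rep sgF_qq)
  define N where "N = norm (GG - q j)"
  have N: "sqrt 3 * N = ss" unfolding N_def using norm_GG[OF j] .
  have N0: "N \<noteq> 0" using N ss_pos by auto
  have Npos: "N > 0" using N0 unfolding N_def by simp
  define t :: real where "t = 1 / 2 ^ m"
  have tpos: "t > 0" unfolding t_def by simp
  have cp: "sgFw q nb GG - p = t *\<^sub>R (GG - q j)" unfolding pe t_def using sgFw_diffR[of nb GG "q j"] lnb by simp
  have ncp: "norm (t *\<^sub>R (GG - q j)) = t * N" unfolding N_def using tpos by simp
  have divR: "x / complex_of_real r = (1 / r) *\<^sub>R x" for x r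
    by (simp add: scaleR_conv_of_real divide_inverse mult.commute)
  have ax: "axis_vec q w i = (1 / (t * N)) *\<^sub>R (t *\<^sub>R (GG - q j))"
    unfolding axis_vec_def Let_def nbw sgFw_centroid p_def[symmetric] cp ncp divR ..
  have ht: "height q w = sqrt 3 / 2 * (ss * t)"
    unfolding height_def sgFw_dist ss_def m_def t_def by simp
  have key: "inner (z - p) (axis_vec q w i) = (1 - bc j y) * height q w" if z: "z = sgFw q nb y" for z y
  proof -
    have zp: "z - p = t *\<^sub>R (y - q j)" unfolding z pe t_def using sgFw_diffR[of nb y "q j"] lnb by simp
    have "inner (z - p) (axis_vec q w i) = t * ((1 / (t * N)) * (t * inner (y - q j) (GG - q j)))"
      unfolding zp ax by (simp only: inner_scaleR_left inner_scaleR_right mult.left_commute)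
    also have "\<dots> = t * (1 / N) * inner (y - q j) (GG - q j)" using tpos N0 by (simp add: field_simps)
    also have "\<dots> = t * (1 / N) * ((1 - bc j y) * ss^2 / 2)" unfolding ip_y[OF j, of y] ..
    also have "\<dots> = (1 - bc j y) * (sqrt 3 / 2 * (ss * t))"
    proof -
      have e: "ss^2 / N = sqrt 3 * ss" unfolding N[symmetric] using N0 by (simp add: power2_eq_square)
      have "t * (1 / N) * ((1 - bc j y) * ss^2 / 2) = (1 - bc j y) * t / 2 * (ss^2 / N)" using N0 by (simp add: field_simps)
      also have "\<dots> = (1 - bc j y) * (sqrt 3 / 2 * (ss * t))" unfolding e by simp
      finally show ?thesis .
    qed
    finally show ?thesis unfolding ht .
  qed
  have hpos: "height q w > 0" unfolding ht using ss_pos tpos by simp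
  show "Eset q w i 0 \<subseteq> {sgFw q w (q i)}"
  proof
    fix z assume "z \<in> Eset q w i 0"
    then have zc: "z \<in> cell q nb" and le: "inner (z - p) (axis_vec q w i) \<le> 0"
      unfolding Eset_def nbw p_def by auto
    then obtain y where y: "y \<in> SG q" "z = sgFw q nb y" unfolding cell_def by auto
    have "(1 - bc j y) * height q w \<le> 0" using le key[OF y(2)] by simp
    then have "bc j y \<ge> 1" using hpos by (simp add: mult_le_0_iff)
    moreover have "bc j y \<le> 1" using TT_le1[of y j] y(1) SG_TT j by auto
    ultimately have "y = q j" using bc_eq_q[of y j] y(1) SG_TT j by auto
    then show "z \<in> {sgFw q w (q i)}" using y pe p_def by simp
  qed
  show "Eset q w i 1 = cell q (u @ i # replicate r j)"
  proof
    show "Eset q w i 1 \<subseteq> cell q (u @ i # replicate r j)" unfolding Eset_def nbw nb_def by auto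
    show "cell q (u @ i # replicate r j) \<subseteq> Eset q w i 1"
    proof
      fix z assume zc: "z \<in> cell q (u @ i # replicate r j)"
      then obtain y where y: "y \<in> SG q" "z = sgFw q nb y" unfolding cell_def nb_def by auto
      have "0 \<le> bc j y" using TT_nn[of y j] y(1) SG_TT j by auto
      then have "(1 - bc j y) * height q w \<le> 1 * height q w" using hpos by (intro mult_right_mono) auto
      then show "z \<in> Eset q w i 1"
        using key[OF y(2)] zc unfolding Eset_def nbw nb_def p_def by auto
    qed
  qed
qed

end


context SGq begin

lemma sum3_gen:
  fixes f :: "nat \<Rightarrow> 'b::comm_monoid_add"
  assumes "a \<in> {0,1,2}" "b \<in> {0,1,2}" "c \<in> {0,1,2}" "a \<noteq> b" "a \<noteq> c" "b \<noteq> c"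
  shows "f a + f b + f c = f 0 + f 1 + f 2"
proof -
  have "{a,b,c} = {0::nat,1,2}"
  proof -
    have "{a,b,c} \<subseteq> {0::nat,1,2}" using assms by auto
    moreover have "card {a,b,c} = 3" using assms by auto
    ultimately show ?thesis by (intro card_subset_eq) auto
  qed
  then have "(\<Sum>k\<in>{a,b,c}. f k) = (\<Sum>k\<in>{0::nat,1,2}. f k)" by simp
  then show ?thesis using assms by (simp add: add.assoc)
qed

lemma sgF_qself: "sgF q a (q a) = q a"
  unfolding sgF_def by simp

lemma sgFw_snoc: "sgFw q (u @ [a]) z = sgFw q u (sgF q a z)"
  by (simp add: sgFw_append)

lemma nbhd_cells:
  assumes u: "u \<in> words n" and a: "a \<in> {0,1,2}" and b: "b \<in> {0,1,2}" and ab: "a \<noteq> b"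
    and v: "v \<in> words (Suc n)" and xv: "sgFw q (u @ [a]) (q b) \<in> cell q v"
  shows "v = u @ [a] \<or> v = u @ [b]"
proof -
  have w: "u @ [a] \<in> words (Suc n)" using u a by (auto simp: words_def)
  from mainL[OF w v b xv] show ?thesis
  proof
    assume "\<exists>u' j r. j \<in> {0,1,2} \<and> j \<noteq> b \<and> u @ [a] = u' @ j # replicate r b \<and> v = u' @ b # replicate r j"
    then obtain u' j r where o: "j \<noteq> b" "u @ [a] = u' @ j # replicate r b" "v = u' @ b # replicate r j" by blast
    have r0: "r = 0"
    proof (rule ccontr)
      assume "r \<noteq> 0"
      then have "last (u' @ j # replicate r b) = b" by (cases r) auto
      then show False using o(2) ab by (metis last_snoc)
    qed
    then have "u = u' \<and> a = j" using o(2) by simp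
    then show ?thesis using o(3) r0 by simp
  qed simp
qed

lemma bc_pts:
  assumes a: "a \<in> {0,1,2}" and b: "b \<in> {0,1,2}"
  shows "bc a (q a) = 1" "bc a (q b) = (if a = b then 1 else 0)" "bc a (sgF q b (q c)) = ((if a = b then 1 else 0) + bc a (q c)) / 2"
  using a b by (auto simp: bc_q bc_sgF)

lemma five_distinct:
  assumes a: "a \<in> {0,1,2}" and b: "b \<in> {0,1,2}" and c: "c \<in> {0,1,2}" and ab: "a \<noteq> b" "a \<noteq> c" "b \<noteq> c"
  shows "q a \<noteq> q b" "q a \<noteq> sgF q a (q c)" "q a \<noteq> sgF q b (q c)" "q a \<noteq> sgF q a (q b)"
        "q b \<noteq> sgF q a (q c)" "q b \<noteq> sgF q b (q c)" "q b \<noteq> sgF q a (q b)"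
        "sgF q a (q c) \<noteq> sgF q b (q c)" "sgF q a (q c) \<noteq> sgF q a (q b)" "sgF q b (q c) \<noteq> sgF q a (q b)"
proof -
  have A: "bc a (q a) = 1" "bc a (q b) = 0" "bc a (sgF q a (q c)) = 1/2" "bc a (sgF q b (q c)) = 0" "bc a (sgF q a (q b)) = 1/2"
    using a b c ab by (auto simp: bc_q bc_sgF)
  have B: "bc b (q a) = 0" "bc b (q b) = 1" "bc b (sgF q a (q c)) = 0" "bc b (sgF q b (q c)) = 1/2" "bc b (sgF q a (q b)) = 1/2"
    using a b c ab by (auto simp: bc_q bc_sgF)
  have C: "bc c (sgF q a (q c)) = 1/2" "bc c (sgF q a (q b)) = 0"
    using a b c ab by (auto simp: bc_q bc_sgF)
  have ne: "bc k x \<noteq> bc k y \<Longrightarrow> x \<noteq> y" for k x y by auto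
  show "q a \<noteq> q b" by (rule ne[of a]) (simp add: A)
  show "q a \<noteq> sgF q a (q c)" by (rule ne[of a]) (simp add: A)
  show "q a \<noteq> sgF q b (q c)" by (rule ne[of a]) (simp add: A)
  show "q a \<noteq> sgF q a (q b)" by (rule ne[of a]) (simp add: A)
  show "q b \<noteq> sgF q a (q c)" by (rule ne[of b]) (simp add: B)
  show "q b \<noteq> sgF q b (q c)" by (rule ne[of b]) (simp add: B)
  show "q b \<noteq> sgF q a (q b)" by (rule ne[of b]) (simp add: B)
  show "sgF q a (q c) \<noteq> sgF q b (q c)" by (rule ne[of a]) (simp add: A)
  show "sgF q a (q c) \<noteq> sgF q a (q b)" by (rule ne[of c]) (simp add: C)
  show "sgF q b (q c) \<noteq> sgF q a (q b)" by (rule ne[of a]) (simp add: A)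
qed

lemma nbhd_set:
  assumes u: "u \<in> words n" and a: "a \<in> {0,1,2}" and b: "b \<in> {0,1,2}" and c: "c \<in> {0,1,2}"
    and ab: "a \<noteq> b" "a \<noteq> c" "b \<noteq> c"
  shows "{y. sg_adj q (Suc n) (sgFw q u (sgF q a (q b))) y} =
    {sgFw q u (q a), sgFw q u (q b), sgFw q u (sgF q a (q c)), sgFw q u (sgF q b (q c))}"
    (is "?L = ?R")
proof -
  let ?x = "sgFw q u (sgF q a (q b))"
  have dist: "q a \<noteq> q b" "q a \<noteq> sgF q a (q c)" "q a \<noteq> sgF q b (q c)" "q a \<noteq> sgF q a (q b)"
        "q b \<noteq> sgF q a (q c)" "q b \<noteq> sgF q b (q c)" "q b \<noteq> sgF q a (q b)"
        "sgF q a (q c) \<noteq> sgF q b (q c)" "sgF q a (q c) \<noteq> sgF q a (q b)" "sgF q b (q c) \<noteq> sgF q a (q b)"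
    using five_distinct[OF a b c ab] by auto
  have inj: "sgFw q u y1 \<noteq> sgFw q u y2" if "y1 \<noteq> y2" for y1 y2 using that sgFw_inj by blast
  have wa: "u @ [a] \<in> words (Suc n)" and wb: "u @ [b] \<in> words (Suc n)" using u a b by (auto simp: words_def)
  have V0e: "sgFw q v ` V0 q = {sgFw q v (q 0), sgFw q v (q 1), sgFw q v (q 2)}" for v
    unfolding V0_def by auto
  have abc: "{a,b,c} = {0::nat,1,2}"
  proof -
    have "{a,b,c} \<subseteq> {0::nat,1,2}" using a b c by auto
    moreover have "card {a,b,c} = 3" using ab by auto
    ultimately show ?thesis by (intro card_subset_eq) auto
  qed
  have V0abc: "sgFw q v ` V0 q = {sgFw q v (q a), sgFw q v (q b), sgFw q v (q c)}" for v
  proof -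
    have "sgFw q v ` V0 q = (\<lambda>k. sgFw q v (q k)) ` {0,1,2}" unfolding V0_def by auto
    also have "\<dots> = (\<lambda>k. sgFw q v (q k)) ` {a,b,c}" unfolding abc ..
    finally show ?thesis by simp
  qed
  have xa: "?x \<in> sgFw q (u @ [a]) ` V0 q" using b by (auto simp: V0_def sgFw_snoc)
  have xb: "?x \<in> sgFw q (u @ [b]) ` V0 q" using a by (auto simp: V0_def sgFw_snoc sgF_qq)
  show ?thesis
  proof
    show "?L \<subseteq> ?R"
    proof
      fix y assume "y \<in> ?L"
      then obtain v where y: "y \<noteq> ?x" "v \<in> words (Suc n)" "?x \<in> sgFw q v ` V0 q" "y \<in> sgFw q v ` V0 q"
        unfolding sg_adj_def by auto
      have "?x \<in> cell q v" using y(3) V0_SG unfolding cell_def by auto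
      then have "v = u @ [a] \<or> v = u @ [b]" using nbhd_cells[OF u a b ab(1) y(2)] by (simp add: sgFw_snoc)
      then show "y \<in> ?R"
      proof
        assume v: "v = u @ [a]"
        then have "y \<in> {sgFw q u (q a), ?x, sgFw q u (sgF q a (q c))}"
          using y(4) unfolding V0abc by (simp add: sgFw_snoc sgF_qself)
        then show ?thesis using y(1) by auto
      next
        assume v: "v = u @ [b]"
        then have "y \<in> {?x, sgFw q u (q b), sgFw q u (sgF q b (q c))}"
          using y(4) unfolding V0abc by (simp add: sgFw_snoc sgF_qself sgF_qq)
        then show ?thesis using y(1) by auto
      qed
    qed
    show "?R \<subseteq> ?L"
    proof -
      have "sgFw q u (q a) \<in> sgFw q (u @ [a]) ` V0 q" using a by (auto simp: V0_def sgFw_snoc sgF_qself)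
      moreover have "sgFw q u (sgF q a (q c)) \<in> sgFw q (u @ [a]) ` V0 q" using c by (auto simp: V0_def sgFw_snoc)
      moreover have "sgFw q u (q b) \<in> sgFw q (u @ [b]) ` V0 q" using b by (auto simp: V0_def sgFw_snoc sgF_qself)
      moreover have "sgFw q u (sgF q b (q c)) \<in> sgFw q (u @ [b]) ` V0 q" using c by (auto simp: V0_def sgFw_snoc)
      moreover have "sgFw q u (q a) \<noteq> ?x" "sgFw q u (sgF q a (q c)) \<noteq> ?x"
          "sgFw q u (q b) \<noteq> ?x" "sgFw q u (sgF q b (q c)) \<noteq> ?x"
        using inj dist by metis+
      moreover have mem: "\<And>y v. y \<noteq> ?x \<Longrightarrow> v \<in> words (Suc n) \<Longrightarrow> ?x \<in> sgFw q v ` V0 q \<Longrightarrow>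
          y \<in> sgFw q v ` V0 q \<Longrightarrow> y \<in> ?L" unfolding sg_adj_def by blast
      ultimately show ?thesis using mem[OF _ wa xa] mem[OF _ wb xb] by simp
    qed
  qed
qed

lemma x_notin_V0:
  assumes u: "u \<in> words n" and a: "a \<in> {0,1,2}" and b: "b \<in> {0,1,2}" and ab: "a \<noteq> b"
  shows "sgFw q u (sgF q a (q b)) \<notin> V0 q"
proof
  assume "sgFw q u (sgF q a (q b)) \<in> V0 q"
  then obtain k where k: "k \<in> {0,1,2}" "sgFw q (u @ [a]) (q b) = q k" unfolding V0_def by (auto simp: sgFw_snoc)
  have "set (u @ [a]) \<subseteq> {0,1,2}" using u a by (auto simp: words_def)
  then have "u @ [a] = replicate (length (u @ [a])) k \<and> q b = q k" using G2[OF _ q_SG[OF b] k(1) k(2)] by blast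
  then have r: "u @ [a] = replicate (length (u @ [a])) k" and qb: "q b = q k" by blast+
  have "a = last (u @ [a])" by simp
  also have "\<dots> = last (replicate (length (u @ [a])) k)" by (subst r) (rule refl)
  also have "\<dots> = k" by simp
  finally have "a = k" .
  moreover have "b = k" using q_inj[of b k] b k qb by auto
  ultimately show False using ab by simp
qed

lemma x_in_Vm:
  assumes u: "u \<in> words n" and a: "a \<in> {0,1,2}" and b: "b \<in> {0,1,2}"
  shows "sgFw q u (sgF q a (q b)) \<in> Vm q (Suc n)"
proof -
  have "u @ [a] \<in> words (Suc n)" using u a by (auto simp: words_def)
  moreover have "q b \<in> V0 q" using b by (auto simp: V0_def)
  moreover have "sgFw q u (sgF q a (q b)) \<in> sgFw q (u @ [a]) ` V0 q"
    using \<open>q b \<in> V0 q\<close> by (rule image_eqI[rotated]) (simp add: sgFw_snoc)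
  ultimately show ?thesis unfolding Vm_def by blast
qed

end


context SGq begin

definition SS :: "(complex \<Rightarrow> real) \<Rightarrow> nat list \<Rightarrow> real" where
  "SS h t = h (sgFw q t (q 0)) + h (sgFw q t (q 1)) + h (sgFw q t (q 2))"

lemma harm_eq:
  assumes harm: "harmonic q h"
    and u: "u \<in> words n" and a: "a \<in> {0,1,2}" and b: "b \<in> {0,1,2}" and c: "c \<in> {0,1,2}"
    and ab: "a \<noteq> b" "a \<noteq> c" "b \<noteq> c"
  shows "4 * h (sgFw q u (sgF q a (q b))) = h (sgFw q u (q a)) + h (sgFw q u (q b))
           + h (sgFw q u (sgF q a (q c))) + h (sgFw q u (sgF q b (q c)))"
proof -
  let ?x = "sgFw q u (sgF q a (q b))"
  have xin: "?x \<in> Vm q (Suc n) - V0 q" using x_in_Vm[OF u a b] x_notin_V0[OF u a b ab(1)] by blast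
  have "h ?x = (1/4) * (\<Sum>y\<in>{y. sg_adj q (Suc n) ?x y}. h y)"
    using harm xin unfolding harmonic_def by auto
  also have "{y. sg_adj q (Suc n) ?x y} =
    {sgFw q u (q a), sgFw q u (q b), sgFw q u (sgF q a (q c)), sgFw q u (sgF q b (q c))}"
    by (rule nbhd_set[OF u a b c ab])
  also have "(\<Sum>y\<in>{sgFw q u (q a), sgFw q u (q b), sgFw q u (sgF q a (q c)), sgFw q u (sgF q b (q c))}. h y)
     = h (sgFw q u (q a)) + (h (sgFw q u (q b)) + (h (sgFw q u (sgF q a (q c))) + h (sgFw q u (sgF q b (q c)))))"
  proof -
    have d: "q a \<noteq> q b" "q a \<noteq> sgF q a (q c)" "q a \<noteq> sgF q b (q c)"
        "q b \<noteq> sgF q a (q c)" "q b \<noteq> sgF q b (q c)" "sgF q a (q c) \<noteq> sgF q b (q c)"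
      using five_distinct[OF a b c ab] by auto
    have inj: "y1 \<noteq> y2 \<Longrightarrow> sgFw q u y1 \<noteq> sgFw q u y2" for y1 y2 using sgFw_inj by blast
    have d': "sgFw q u (q a) \<noteq> sgFw q u (q b)" "sgFw q u (q a) \<noteq> sgFw q u (sgF q a (q c))"
        "sgFw q u (q a) \<noteq> sgFw q u (sgF q b (q c))"
        "sgFw q u (q b) \<noteq> sgFw q u (sgF q a (q c))" "sgFw q u (q b) \<noteq> sgFw q u (sgF q b (q c))"
        "sgFw q u (sgF q a (q c)) \<noteq> sgFw q u (sgF q b (q c))"
      using inj d by blast+
    show ?thesis using d' by simp
  qed
  finally show ?thesis by simp
qed

lemma midpt:
  assumes harm: "harmonic q h"
    and u: "u \<in> words n" and a: "a \<in> {0,1,2}" and b: "b \<in> {0,1,2}" and c: "c \<in> {0,1,2}"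
    and ab: "a \<noteq> b" "a \<noteq> c" "b \<noteq> c"
  shows "5 * h (sgFw q u (sgF q a (q b))) = 2 * h (sgFw q u (q a)) + 2 * h (sgFw q u (q b)) + h (sgFw q u (q c))"
proof -
  have E1: "4 * h (sgFw q u (sgF q a (q b))) = h (sgFw q u (q a)) + h (sgFw q u (q b))
           + h (sgFw q u (sgF q a (q c))) + h (sgFw q u (sgF q b (q c)))"
    by (rule harm_eq[OF harm u a b c ab])
  have E2: "4 * h (sgFw q u (sgF q a (q c))) = h (sgFw q u (q a)) + h (sgFw q u (q c))
           + h (sgFw q u (sgF q a (q b))) + h (sgFw q u (sgF q c (q b)))"
    using harm_eq[OF harm u a c b] ab by auto
  have E3: "4 * h (sgFw q u (sgF q b (q c))) = h (sgFw q u (q b)) + h (sgFw q u (q c))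
           + h (sgFw q u (sgF q b (q a))) + h (sgFw q u (sgF q c (q a)))"
    using harm_eq[OF harm u b c a] ab by auto
  have s: "sgF q c (q b) = sgF q b (q c)" "sgF q b (q a) = sgF q a (q b)" "sgF q c (q a) = sgF q a (q c)"
    by (simp_all add: sgF_qq)
  show ?thesis using E1 E2 E3 unfolding s by argo
qed

lemma SS_perm:
  assumes "a \<in> {0,1,2}" "b \<in> {0,1,2}" "c \<in> {0,1,2}" "a \<noteq> b" "a \<noteq> c" "b \<noteq> c"
  shows "SS h t = h (sgFw q t (q a)) + h (sgFw q t (q b)) + h (sgFw q t (q c))"
  unfolding SS_def using sum3_gen[OF assms, of "\<lambda>k. h (sgFw q t (q k))"] by simp

lemma SS_split:
  assumes harm: "harmonic q h" and t: "t \<in> words n"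
  shows "SS h (t @ [0]) + SS h (t @ [1]) + SS h (t @ [2]) = 3 * SS h t"
proof -
  have m01: "5 * h (sgFw q t (sgF q 0 (q 1))) = 2 * h (sgFw q t (q 0)) + 2 * h (sgFw q t (q 1)) + h (sgFw q t (q 2))"
    by (rule midpt[OF harm t]) auto
  have m02: "5 * h (sgFw q t (sgF q 0 (q 2))) = 2 * h (sgFw q t (q 0)) + 2 * h (sgFw q t (q 2)) + h (sgFw q t (q 1))"
    by (rule midpt[OF harm t]) auto
  have m12: "5 * h (sgFw q t (sgF q 1 (q 2))) = 2 * h (sgFw q t (q 1)) + 2 * h (sgFw q t (q 2)) + h (sgFw q t (q 0))"
    by (rule midpt[OF harm t]) auto
  have s: "sgF q 1 (q 0) = sgF q 0 (q 1)" "sgF q 2 (q 0) = sgF q 0 (q 2)" "sgF q 2 (q 1) = sgF q 1 (q 2)"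
    by (simp_all add: sgF_qq)
  have "SS h (t @ [0]) = h (sgFw q t (q 0)) + h (sgFw q t (sgF q 0 (q 1))) + h (sgFw q t (sgF q 0 (q 2)))"
    unfolding SS_def sgFw_snoc sgF_qself ..
  moreover have "SS h (t @ [1]) = h (sgFw q t (sgF q 0 (q 1))) + h (sgFw q t (q 1)) + h (sgFw q t (sgF q 1 (q 2)))"
    unfolding SS_def sgFw_snoc sgF_qself s ..
  moreover have "SS h (t @ [2]) = h (sgFw q t (sgF q 0 (q 2))) + h (sgFw q t (sgF q 1 (q 2))) + h (sgFw q t (q 2))"
    unfolding SS_def sgFw_snoc sgF_qself s ..
  ultimately show ?thesis using m01 m02 m12 unfolding SS_def by argo
qed

lemma words_Suc_image: "words (Suc k) = (\<lambda>(v, a). v @ [a]) ` (words k \<times> {0,1,2})"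
proof
  show "words (Suc k) \<subseteq> (\<lambda>(v, a). v @ [a]) ` (words k \<times> {0,1,2})"
  proof
    fix w assume "w \<in> words (Suc k)"
    then obtain t a where "w = t @ [a]" "t \<in> words k" "a \<in> {0,1,2}" using words_Suc by blast
    then show "w \<in> (\<lambda>(v, a). v @ [a]) ` (words k \<times> {0,1,2})" by force
  qed
  show "(\<lambda>(v, a). v @ [a]) ` (words k \<times> {0,1,2}) \<subseteq> words (Suc k)"
    using words_Suc by auto
qed

lemma inj_snoc: "inj_on (\<lambda>(v, a). v @ [a]) A"
  by (auto simp: inj_on_def)

lemma sum_words_Suc:
  fixes f :: "nat list \<Rightarrow> real"
  shows "(\<Sum>v\<in>words (Suc k). f v) = (\<Sum>v\<in>words k. f (v @ [0]) + f (v @ [1]) + f (v @ [2]))"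
proof -
  have "(\<Sum>v\<in>words (Suc k). f v) = (\<Sum>x\<in>words k \<times> {0,1,2}. f ((\<lambda>(v, a). v @ [a]) x))"
    unfolding words_Suc_image by (rule sum.reindex[OF inj_snoc, unfolded comp_def])
  also have "\<dots> = (\<Sum>v\<in>words k. \<Sum>a\<in>{0::nat,1,2}. f (v @ [a]))"
    by (rule sym, subst sum.cartesian_product) (simp add: case_prod_unfold)
  also have "\<dots> = (\<Sum>v\<in>words k. f (v @ [0]) + f (v @ [1]) + f (v @ [2]))"
    by (simp add: add.assoc)
  finally show ?thesis .
qed

lemma SS_words:
  assumes harm: "harmonic q h" and t: "t \<in> words n"
  shows "(\<Sum>v\<in>words k. SS h (t @ v)) = 3 ^ k * SS h t"
proof (induction k)
  case 0 then show ?case by (simp add: words_Nil)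
next
  case (Suc k)
  have "(\<Sum>v\<in>words (Suc k). SS h (t @ v)) = (\<Sum>v\<in>words k. SS h ((t @ v) @ [0]) + SS h ((t @ v) @ [1]) + SS h ((t @ v) @ [2]))"
    using sum_words_Suc[of "\<lambda>v. SS h (t @ v)" k] by simp
  also have "\<dots> = (\<Sum>v\<in>words k. 3 * SS h (t @ v))"
  proof (rule sum.cong[OF refl])
    fix v assume "v \<in> words k"
    then have "t @ v \<in> words (n + k)" using words_append[OF t] by blast
    then show "SS h ((t @ v) @ [0]) + SS h ((t @ v) @ [1]) + SS h ((t @ v) @ [2]) = 3 * SS h (t @ v)"
      by (rule SS_split[OF harm])
  qed
  also have "\<dots> = 3 * (\<Sum>v\<in>words k. SS h (t @ v))" by (rule sum_distrib_left[symmetric])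
  also have "\<dots> = 3 ^ Suc k * SS h t" unfolding Suc by simp
  finally show ?case .
qed

lemma pair_sum:
  assumes harm: "harmonic q h" and u: "u \<in> words n" and i: "i \<in> {0,1,2}" and j: "j \<in> {0,1,2}" and ij: "i \<noteq> j"
  shows "SS h (u @ j # replicate r i) + SS h (u @ i # replicate r j) = 6 * h (sgFw q u (sgF q j (q i)))"
proof -
  obtain c where c: "c \<in> {0,1,2}" "c \<noteq> i" "c \<noteq> j" using third[OF i j ij] by metis
  define x where "x = h (sgFw q u (sgF q j (q i)))"
  have xs: "h (sgFw q u (sgF q i (q j))) = x" unfolding x_def by (simp add: sgF_qq)
  show ?thesis unfolding x_def[symmetric]
  proof (induction r)
    case 0
    have E: "4 * x = h (sgFw q u (q j)) + h (sgFw q u (q i)) + h (sgFw q u (sgF q j (q c))) + h (sgFw q u (sgF q i (q c)))"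
      unfolding x_def using harm_eq[OF harm u j i c(1)] ij c by auto
    have S1: "SS h (u @ [j]) = x + h (sgFw q u (q j)) + h (sgFw q u (sgF q j (q c)))"
      using SS_perm[OF i j c(1) ij c(2)[symmetric] c(3)[symmetric], of h "u @ [j]"]
      unfolding sgFw_snoc sgF_qself x_def by simp
    have S2: "SS h (u @ [i]) = h (sgFw q u (q i)) + x + h (sgFw q u (sgF q i (q c)))"
      using SS_perm[OF i j c(1) ij c(2)[symmetric] c(3)[symmetric], of h "u @ [i]"]
      unfolding sgFw_snoc sgF_qself xs by simp
    show ?case using E S1 S2 by simp
  next
    case (Suc r)
    define t where "t = u @ j # replicate r i"
    define t' where "t' = u @ i # replicate r j"
    have tw: "t \<in> words (n + Suc r)" unfolding t_def using u i j by (auto simp: words_def)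
    have tw': "t' \<in> words (n + Suc r)" unfolding t'_def using u i j by (auto simp: words_def)
    have T: "u @ j # replicate (Suc r) i = t @ [i]" unfolding t_def by (simp add: replicate_append_same)
    have T': "u @ i # replicate (Suc r) j = t' @ [j]" unfolding t'_def by (simp add: replicate_append_same)
    have hi: "h (sgFw q t (q i)) = x" unfolding t_def x_def by (simp add: sgFw_append sgFw_rep)
    have hj: "h (sgFw q t' (q j)) = x" unfolding t'_def using xs by (simp add: sgFw_append sgFw_rep)
    have St: "SS h t = h (sgFw q t (q i)) + h (sgFw q t (q j)) + h (sgFw q t (q c))"
      using SS_perm[OF i j c(1) ij c(2)[symmetric] c(3)[symmetric]] .
    have St': "SS h t' = h (sgFw q t' (q i)) + h (sgFw q t' (q j)) + h (sgFw q t' (q c))"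
      using SS_perm[OF i j c(1) ij c(2)[symmetric] c(3)[symmetric]] .
    have ST: "SS h (t @ [i]) = h (sgFw q t (q i)) + h (sgFw q t (sgF q i (q j))) + h (sgFw q t (sgF q i (q c)))"
      using SS_perm[OF i j c(1) ij c(2)[symmetric] c(3)[symmetric], of h "t @ [i]"]
      unfolding sgFw_snoc sgF_qself by simp
    have ST': "SS h (t' @ [j]) = h (sgFw q t' (sgF q j (q i))) + h (sgFw q t' (q j)) + h (sgFw q t' (sgF q j (q c)))"
      using SS_perm[OF i j c(1) ij c(2)[symmetric] c(3)[symmetric], of h "t' @ [j]"]
      unfolding sgFw_snoc sgF_qself by simp
    have m1: "5 * h (sgFw q t (sgF q i (q j))) = 2 * h (sgFw q t (q i)) + 2 * h (sgFw q t (q j)) + h (sgFw q t (q c))"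
      using midpt[OF harm tw i j c(1) ij c(2)[symmetric] c(3)[symmetric]] .
    have m2: "5 * h (sgFw q t (sgF q i (q c))) = 2 * h (sgFw q t (q i)) + 2 * h (sgFw q t (q c)) + h (sgFw q t (q j))"
      using midpt[OF harm tw i c(1) j] ij c by auto
    have m3: "5 * h (sgFw q t' (sgF q j (q i))) = 2 * h (sgFw q t' (q j)) + 2 * h (sgFw q t' (q i)) + h (sgFw q t' (q c))"
      using midpt[OF harm tw' j i c(1)] ij c by auto
    have m4: "5 * h (sgFw q t' (sgF q j (q c))) = 2 * h (sgFw q t' (q j)) + 2 * h (sgFw q t' (q c)) + h (sgFw q t' (q i))"
      using midpt[OF harm tw' j c(1) i] ij c by auto
    have IH: "SS h t + SS h t' = 6 * x" using Suc unfolding t_def t'_def .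
    show ?case unfolding T T' using ST ST' m1 m2 m3 m4 St St' hi hj IH by argo
  qed
qed

end



locale SGm = SGq + fixes \<mu> :: "complex measure" assumes mu: "sg_measure q \<mu>"
begin

lemma ps: "prob_space \<mu>" using mu unfolding sg_measure_def by simp
lemma sets_mu: "sets \<mu> = sets borel" using mu unfolding sg_measure_def by simp
lemma meas_cell: "w \<in> words m \<Longrightarrow> measure \<mu> (cell q w) = (1/3)^m" using mu unfolding sg_measure_def by simp

sublocale P: prob_space \<mu> by (rule ps)

lemma space_mu: "space \<mu> = UNIV" using sets_eq_imp_space_eq[OF sets_mu] by simp

lemma compact_cell: "compact (cell q w)"
  unfolding cell_def by (intro compact_continuous_image sgFw_cont SG_compact)

lemma cell_sets: "cell q w \<in> sets \<mu>"
  unfolding sets_mu by (rule borel_closed, rule compact_imp_closed, rule compact_cell)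

lemma SG_sets: "SG q \<in> sets \<mu>" using cell_sets[of "[]"] cell_Nil by simp

lemma meas_SG: "measure \<mu> (SG q) = 1" using meas_cell[of "[]" 0] by (simp add: words_Nil cell_Nil)

lemma pt_sets: "{p} \<in> sets \<mu>" unfolding sets_mu by (rule borel_closed) simp

lemma meas_pt: "measure \<mu> {p} = 0"
proof (cases "p \<in> SG q")
  case True
  have le: "measure \<mu> {p} \<le> (1/3)^n" for n
  proof -
    obtain w where w: "w \<in> words n" "p \<in> cell q w" using SG_cover[OF True] by blast
    then have "measure \<mu> {p} \<le> measure \<mu> (cell q w)" by (intro P.finite_measure_mono cell_sets) auto
    then show ?thesis using meas_cell[OF w(1)] by simp
  qed
  show ?thesis
  proof (rule ccontr)
    assume "measure \<mu> {p} \<noteq> 0"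
    then have pos: "measure \<mu> {p} > 0" using measure_nonneg[of \<mu> "{p}"] by linarith
    obtain n where "(1/3::real)^n < measure \<mu> {p}" using real_arch_pow_inv[OF pos, of "1/3"] by auto
    then show False using le[of n] by simp
  qed
next
  case False
  have sc: "space \<mu> - SG q \<in> sets \<mu>" using SG_sets by auto
  have "measure \<mu> {p} \<le> measure \<mu> (space \<mu> - SG q)" using False space_mu by (intro P.finite_measure_mono sc) auto
  also have "\<dots> = measure \<mu> (space \<mu>) - measure \<mu> (SG q)" by (rule P.finite_measure_compl[OF SG_sets])
  also have "\<dots> = 0" using P.prob_space meas_SG by simp
  finally show ?thesis by (simp add: measure_le_0_iff)
qed

lemma pt_null: "{p} \<in> null_sets \<mu>"
  by (rule null_setsI) (simp_all add: P.emeasure_eq_measure meas_pt pt_sets)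

lemma AE_avoid: "A \<inter> B \<subseteq> {p} \<Longrightarrow> AE x in \<mu>. \<not> (x \<in> A \<and> x \<in> B)"
  by (rule AE_I'[OF pt_null]) auto

lemma AE_cells: "v \<in> words n \<Longrightarrow> v' \<in> words n \<Longrightarrow> v \<noteq> v' \<Longrightarrow> AE x in \<mu>. \<not> (x \<in> cell q v \<and> x \<in> cell q v')"
  using cells_inter AE_avoid by metis

lemma h_bound: fixes h :: "complex \<Rightarrow> real" shows "continuous_on (SG q) h \<Longrightarrow> \<exists>B. \<forall>x\<in>SG q. norm (h x) \<le> B"
proof -
  assume "continuous_on (SG q) h"
  then have "compact (h ` SG q)" using SG_compact by (rule compact_continuous_image)
  then have "bounded (h ` SG q)" by (rule compact_imp_bounded)
  then show ?thesis unfolding bounded_iff by auto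
qed

lemma set_int:
  fixes h :: "complex \<Rightarrow> real"
  assumes hc: "continuous_on (SG q) h" and A: "A \<in> sets \<mu>" and AS: "A \<subseteq> SG q"
  shows "set_integrable \<mu> A h"
proof -
  obtain B where B: "\<forall>x\<in>SG q. norm (h x) \<le> B" using h_bound[OF hc] by blast
  have Ab: "A \<in> sets borel" using A sets_mu by simp
  have meas: "(\<lambda>x. indicator A x *\<^sub>R h x) \<in> borel_measurable \<mu>"
    unfolding measurable_cong_sets[OF sets_mu refl]
    by (rule borel_measurable_continuous_on_indicator[OF Ab continuous_on_subset[OF hc AS]])
  have fin: "emeasure \<mu> A < \<infinity>" using P.emeasure_finite[of A] by (simp add: less_top[symmetric])
  have b1: "AE x in \<mu>. x \<in> A \<longrightarrow> norm (indicator A x *\<^sub>R h x) \<le> B"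
    using B AS by (intro AE_I2) auto
  have b2: "AE x in \<mu>. x \<notin> A \<longrightarrow> indicator A x *\<^sub>R h x = 0" by (intro AE_I2) auto
  note th = integrableI_bounded_set[where M=\<mu> and A=A and f="\<lambda>x. indicator A x *\<^sub>R h x" and B=B]
  show ?thesis unfolding set_integrable_def
    by (rule th) (use A meas fin b1 b2 in auto)
qed

lemma cell_sub: "set w \<subseteq> {0,1,2} \<Longrightarrow> cell q w \<subseteq> SG q" by (rule cell_SG)

definition II :: "(complex \<Rightarrow> real) \<Rightarrow> nat list \<Rightarrow> real" where
  "II h w = (LINT x:cell q w|\<mu>. h x)"

lemma Un_int:
  fixes h :: "complex \<Rightarrow> real"
  assumes hc: "continuous_on (SG q) h" and A: "A \<in> sets \<mu>" "A \<subseteq> SG q" and B: "B \<in> sets \<mu>" "B \<subseteq> SG q"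
    and ae: "AE x in \<mu>. \<not> (x \<in> A \<and> x \<in> B)"
  shows "(LINT x:A \<union> B|\<mu>. h x) = (LINT x:A|\<mu>. h x) + (LINT x:B|\<mu>. h x)"
proof -
  have i1: "set_integrable \<mu> A h" by (rule set_int[OF hc A])
  have i2: "set_integrable \<mu> B h" by (rule set_int[OF hc B])
  show ?thesis by (rule set_integral_Un_AE) (use ae A B i1 i2 in auto)
qed

lemma I_split:
  assumes hc: "continuous_on (SG q) h" and t: "set t \<subseteq> {0,1,2}"
  shows "II h t = II h (t @ [0]) + II h (t @ [1]) + II h (t @ [2])"
proof -
  have ce: "cell q t = cell q (t @ [0]) \<union> (cell q (t @ [1]) \<union> cell q (t @ [2]))"
    using cell_split[of t] by simp
  have tw: "t @ [a] \<in> words (Suc (length t))" if "a \<in> {0,1,2}" for a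
    using t that by (auto simp: words_def)
  have sub: "set (t @ [a]) \<subseteq> {0,1,2}" if "a \<in> {0,1,2}" for a using t that by auto
  have S: "cell q (t @ [a]) \<subseteq> SG q" if "a \<in> {0,1,2}" for a using cell_sub[OF sub[OF that]] .
  have ae01: "AE x in \<mu>. \<not> (x \<in> cell q (t @ [0]) \<and> x \<in> cell q (t @ [1]))" by (rule AE_cells[OF tw tw]) auto
  have ae02: "AE x in \<mu>. \<not> (x \<in> cell q (t @ [0]) \<and> x \<in> cell q (t @ [2]))" by (rule AE_cells[OF tw tw]) auto
  have ae12: "AE x in \<mu>. \<not> (x \<in> cell q (t @ [1]) \<and> x \<in> cell q (t @ [2]))" by (rule AE_cells[OF tw tw]) auto
  have ae: "AE x in \<mu>. \<not> (x \<in> cell q (t @ [0]) \<and> x \<in> cell q (t @ [1]) \<union> cell q (t @ [2]))"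
    using ae01 ae02 by eventually_elim auto
  have "II h t = (LINT x:cell q (t @ [0]) \<union> (cell q (t @ [1]) \<union> cell q (t @ [2]))|\<mu>. h x)"
    unfolding II_def ce ..
  also have "\<dots> = II h (t @ [0]) + (LINT x:cell q (t @ [1]) \<union> cell q (t @ [2])|\<mu>. h x)"
    unfolding II_def using S cell_sets by (intro Un_int[OF hc _ _ _ _ ae]) auto
  also have "(LINT x:cell q (t @ [1]) \<union> cell q (t @ [2])|\<mu>. h x) = II h (t @ [1]) + II h (t @ [2])"
    unfolding II_def using S cell_sets by (intro Un_int[OF hc _ _ _ _ ae12]) auto
  finally show ?thesis by simp
qed

lemma I_words:
  assumes hc: "continuous_on (SG q) h" and t: "set t \<subseteq> {0,1,2}"
  shows "(\<Sum>v\<in>words k. II h (t @ v)) = II h t"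
proof (induction k)
  case 0 then show ?case by (simp add: words_Nil)
next
  case (Suc k)
  have "(\<Sum>v\<in>words (Suc k). II h (t @ v)) = (\<Sum>v\<in>words k. II h ((t @ v) @ [0]) + II h ((t @ v) @ [1]) + II h ((t @ v) @ [2]))"
    using sum_words_Suc[of "\<lambda>v. II h (t @ v)" k] by simp
  also have "\<dots> = (\<Sum>v\<in>words k. II h (t @ v))"
  proof (rule sum.cong[OF refl])
    fix v assume "v \<in> words k"
    then have tv: "set (t @ v) \<subseteq> {0,1,2}" using t by (auto simp: words_def)
    show "II h ((t @ v) @ [0]) + II h ((t @ v) @ [1]) + II h ((t @ v) @ [2]) = II h (t @ v)"
      by (rule I_split[OF hc tv, symmetric])
  qed
  finally show ?case using Suc by simp
qed

lemma card_words: "card (words k) = 3 ^ k"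
proof (induction k)
  case 0 then show ?case by (simp add: words_Nil)
next
  case (Suc k)
  have "card (words (Suc k)) = card (words k \<times> {0::nat,1,2})"
    unfolding words_Suc_image by (rule card_image[OF inj_snoc])
  also have "\<dots> = 3 * 3 ^ k" using Suc by (simp add: card_cartesian_product)
  finally show ?case by simp
qed

lemma approx:
  fixes h :: "complex \<Rightarrow> real"
  assumes hc: "continuous_on (SG q) h" and A: "A \<in> sets \<mu>" "A \<subseteq> SG q"
    and bnd: "\<And>x. x \<in> A \<Longrightarrow> \<bar>h x - c\<bar> \<le> e"
  shows "\<bar>(LINT x:A|\<mu>. h x) - measure \<mu> A * c\<bar> \<le> measure \<mu> A * e"
proof -
  have fin: "emeasure \<mu> A < \<infinity>" using P.emeasure_finite[of A] by (simp add: less_top[symmetric])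
  have ci: "set_integrable \<mu> A (\<lambda>_. k)" for k :: real
    unfolding set_integrable_def using A(1) fin by (rule integrable_indicator)
  have cv: "(LINT x:A|\<mu>. k) = measure \<mu> A * k" for k :: real
    using set_integral_const[OF A(1), of k] fin by simp
  have hi: "set_integrable \<mu> A h" by (rule set_int[OF hc A])
  have "(LINT x:A|\<mu>. c - e) \<le> (LINT x:A|\<mu>. h x)"
    by (intro set_integral_mono[OF ci hi]) (auto dest!: bnd simp: abs_le_iff)
  moreover have "(LINT x:A|\<mu>. h x) \<le> (LINT x:A|\<mu>. c + e)"
    by (intro set_integral_mono[OF hi ci]) (auto dest!: bnd simp: abs_le_iff)
  ultimately show ?thesis unfolding cv by (simp add: abs_le_iff algebra_simps)
qed

end



context SGq begin

lemma nb_facts: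
  assumes w: "w \<in> words (length w)" and i: "i \<in> {0,1,2}" and j: "j \<in> {0,1,2}" and ji: "j \<noteq> i"
    and wd: "w = u @ j # replicate r i"
  shows "u @ i # replicate r j \<in> words (length w)" "u @ i # replicate r j \<noteq> w"
    "sgFw q w (q i) \<in> cell q (u @ i # replicate r j)" "u \<in> words (length u)"
    "sgFw q w (q i) = sgFw q u (sgF q j (q i))"
proof -
  have uS: "set u \<subseteq> {0,1,2}" using w wd by (auto simp: words_def)
  show "u @ i # replicate r j \<in> words (length w)" unfolding words_def using uS i j wd by auto
  show "u @ i # replicate r j \<noteq> w" using ji wd by simp
  have pe: "sgFw q w (q i) = sgFw q (u @ i # replicate r j) (q j)"
    using wd by (simp add: sgFw_append sgFw_rep sgF_qq)
  show "sgFw q w (q i) \<in> cell q (u @ i # replicate r j)" using pe q_cell[OF j] by simp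
  show "u \<in> words (length u)" using uS by (simp add: words_def)
  show "sgFw q w (q i) = sgFw q u (sgF q j (q i))" using wd by (simp add: sgFw_append sgFw_rep)
qed

lemma nonconst:
  assumes "cell q w \<inter> V0 q = {}" "i \<in> {0,1,2}"
  shows "w \<noteq> replicate (length w) i"
proof
  assume "w = replicate (length w) i"
  then have "sgFw q w (q i) = q i" by (metis sgFw_rep)
  then have "q i \<in> cell q w" using q_cell[OF assms(2), of w] by simp
  moreover have "q i \<in> V0 q" using assms(2) by (auto simp: V0_def)
  ultimately show False using assms(1) by blast
qed

end

context SGm begin

lemma I_formula:
  fixes h :: "complex \<Rightarrow> real"
  assumes harm: "harmonic q h" and t: "t \<in> words m"
  shows "II h t = (1/3)^m * SS h t / 3"
proof -
  have hc: "continuous_on (SG q) h" using harm unfolding harmonic_def by simp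
  have tS: "set t \<subseteq> {0,1,2}" and tl: "length t = m" using t by (auto simp: words_def)
  have main: "\<bar>II h t - (1/3)^m * SS h t / 3\<bar> \<le> (1/3)^m * e" if e: "e > 0" for e
  proof -
    have uc: "uniformly_continuous_on (SG q) h" by (rule compact_uniformly_continuous[OF hc SG_compact])
    obtain d where d: "d > 0" "\<And>x x'. x \<in> SG q \<Longrightarrow> x' \<in> SG q \<Longrightarrow> dist x' x < d \<Longrightarrow> dist (h x') (h x) < e"
      using uc e unfolding uniformly_continuous_on_def by metis
    obtain R where R: "\<And>x y. x \<in> SG q \<Longrightarrow> y \<in> SG q \<Longrightarrow> dist x y \<le> R"
      using bounded_two_points[of "SG q"] compact_imp_bounded[OF SG_compact] by auto
    have R0: "0 \<le> R" using R[of "q 0" "q 0"] q_SG[of 0] by simp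
    obtain k where k: "(1/2::real)^k < d / (R + 1)"
      using real_arch_pow_inv[of "d / (R + 1)" "1/2"] d(1) R0 by auto
    have close: "\<bar>h z - SS h (t @ v) / 3\<bar> \<le> e" if v: "v \<in> words k" and z: "z \<in> cell q (t @ v)" for v z
    proof -
      obtain y where y: "y \<in> SG q" "z = sgFw q (t @ v) y" using z unfolding cell_def by auto
      have len: "length (t @ v) = m + k" using tl v by (simp add: words_def)
      have tvS: "set (t @ v) \<subseteq> {0,1,2}" using tS v by (auto simp: words_def)
      have zS: "z \<in> SG q" using cell_SG[OF tvS] z by auto
      have dj: "\<bar>h z - h (sgFw q (t @ v) (q j))\<bar> < e" if j: "j \<in> {0,1,2}" for j
      proof -
        have pS: "sgFw q (t @ v) (q j) \<in> SG q" using cell_SG[OF tvS] q_cell[OF j] by auto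
        have "dist z (sgFw q (t @ v) (q j)) = dist y (q j) / 2 ^ (m + k)"
          using y(2) sgFw_dist len by simp
        also have "\<dots> \<le> R / 2 ^ (m + k)" using R[OF y(1) q_SG[OF j]] by (simp add: divide_right_mono)
        also have "\<dots> \<le> R / 2 ^ k" using R0 by (intro divide_left_mono) (auto simp: power_increasing)
        also have "\<dots> = R * (1/2)^k" by (simp add: power_one_over)
        also have "\<dots> \<le> (R + 1) * (1/2)^k" by simp
        also have "\<dots> < (R + 1) * (d / (R + 1))" using k R0 by (intro mult_strict_left_mono) auto
        also have "\<dots> = d" using R0 by simp
        finally have "dist z (sgFw q (t @ v) (q j)) < d" .
        then have "dist (h z) (h (sgFw q (t @ v) (q j))) < e" using d(2)[OF pS zS] by (simp add: dist_commute)
        then show ?thesis by (simp add: dist_real_def)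
      qed
      have a: "h z - h (sgFw q (t @ v) (q 0)) < e" "h (sgFw q (t @ v) (q 0)) - h z < e"
        using dj[of 0] by (simp_all add: abs_less_iff)
      have b: "h z - h (sgFw q (t @ v) (q 1)) < e" "h (sgFw q (t @ v) (q 1)) - h z < e"
        using dj[of 1] by (simp_all add: abs_less_iff)
      have c: "h z - h (sgFw q (t @ v) (q 2)) < e" "h (sgFw q (t @ v) (q 2)) - h z < e"
        using dj[of 2] by (simp_all add: abs_less_iff)
      have l1: "h z * 3 - SS h (t @ v) \<le> e * 3" unfolding SS_def using a b c by linarith
      have l2: "SS h (t @ v) - h z * 3 \<le> e * 3" unfolding SS_def using a b c by linarith
      show ?thesis using l1 l2 by (auto simp: abs_le_iff field_simps)
    qed
    have each: "\<bar>II h (t @ v) - (1/3)^(m+k) * (SS h (t @ v) / 3)\<bar> \<le> (1/3)^(m+k) * e" if v: "v \<in> words k" for v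
    proof -
      have tv: "t @ v \<in> words (m + k)" using words_append[OF t v] .
      have tvS: "set (t @ v) \<subseteq> {0,1,2}" using tv by (simp add: words_def)
      have "\<bar>II h (t @ v) - measure \<mu> (cell q (t @ v)) * (SS h (t @ v) / 3)\<bar> \<le> measure \<mu> (cell q (t @ v)) * e"
        unfolding II_def by (rule approx[OF hc cell_sets cell_sub[OF tvS] close[OF v]])
      then show ?thesis unfolding meas_cell[OF tv] .
    qed
    have pw: "(1/3::real)^(m+k) * 3^k = (1/3)^m"
      by (simp add: power_add field_simps)
    have s1: "(\<Sum>v\<in>words k. II h (t @ v)) = II h t" by (rule I_words[OF hc tS])
    have s2: "(\<Sum>v\<in>words k. (1/3)^(m+k) * (SS h (t @ v) / 3)) = (1/3)^m * SS h t / 3"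
    proof -
      have "(\<Sum>v\<in>words k. (1/3)^(m+k) * (SS h (t @ v) / 3)) = (1/3)^(m+k) / 3 * (\<Sum>v\<in>words k. SS h (t @ v))"
        by (simp add: sum_distrib_left sum_divide_distrib)
      also have "\<dots> = (1/3)^(m+k) / 3 * (3 ^ k * SS h t)" unfolding SS_words[OF harm t] ..
      also have "\<dots> = ((1/3)^(m+k) * 3 ^ k) * SS h t / 3" by simp
      also have "\<dots> = (1/3)^m * SS h t / 3" unfolding pw ..
      finally show ?thesis .
    qed
    have "\<bar>II h t - (1/3)^m * SS h t / 3\<bar> = \<bar>\<Sum>v\<in>words k. (II h (t @ v) - (1/3)^(m+k) * (SS h (t @ v) / 3))\<bar>"
      unfolding sum_subtractf s1 s2 ..
    also have "\<dots> \<le> (\<Sum>v\<in>words k. \<bar>II h (t @ v) - (1/3)^(m+k) * (SS h (t @ v) / 3)\<bar>)" by (rule sum_abs)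
    also have "\<dots> \<le> (\<Sum>v\<in>words k. (1/3)^(m+k) * e)" by (rule sum_mono) (rule each)
    also have "\<dots> = 3 ^ k * ((1/3)^(m+k) * e)" by (simp add: card_words)
    also have "\<dots> = (1/3)^m * e" using pw by (simp add: algebra_simps)
    finally show ?thesis .
  qed
  show ?thesis
  proof (rule ccontr)
    assume ne: "II h t \<noteq> (1/3)^m * SS h t / 3"
    define D where "D = \<bar>II h t - (1/3)^m * SS h t / 3\<bar>"
    have Dpos: "D > 0" using ne unfolding D_def by simp
    have cpos: "(1/3::real)^m > 0" by simp
    have "D \<le> (1/3)^m * (D / (2 * (1/3)^m))" unfolding D_def
      using main[of "D / (2 * (1/3)^m)"] Dpos cpos unfolding D_def by simp
    also have "\<dots> = D / 2" using cpos by (simp add: field_simps)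
    finally show False using Dpos by simp
  qed
qed

lemma pair_II:
  fixes h :: "complex \<Rightarrow> real"
  assumes harm: "harmonic q h" and w: "w \<in> words (length w)" and i: "i \<in> {0,1,2}" and j: "j \<in> {0,1,2}" and ji: "j \<noteq> i"
    and wd: "w = u @ j # replicate r i"
  shows "II h w + II h (u @ i # replicate r j) = 2 * (1/3)^(length w) * h (sgFw q w (q i))"
proof -
  note nf = nb_facts[OF w i j ji wd]
  have "II h w + II h (u @ i # replicate r j) = (1/3)^(length w) * (SS h w + SS h (u @ i # replicate r j)) / 3"
    using I_formula[OF harm w] I_formula[OF harm nf(1)] by (simp add: field_simps)
  also have "SS h w + SS h (u @ i # replicate r j) = 6 * h (sgFw q w (q i))"
    using pair_sum[OF harm nf(4) i j ji[symmetric], of r] wd nf(5) by simp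
  finally show ?thesis by simp
qed

lemma main_result:
  fixes h :: "complex \<Rightarrow> real"
  assumes w: "w \<in> words (length w)" and cw: "cell q w \<inter> V0 q = {}" and harm: "harmonic q h"
  shows "mean_val \<mu> (Bset q w 0 0 1) h = h (sgFw q w (q 2))
    \<and> mean_val \<mu> (Bset q w 0 1 1) h =
           - (1/9) * h (sgFw q w (q 0)) + (5/9) * h (sgFw q w (q 1)) + (5/9) * h (sgFw q w (q 2))"
proof -
  define m where "m = length w"
  have hc: "continuous_on (SG q) h" using harm unfolding harmonic_def by simp
  have wS: "set w \<subseteq> {0,1,2}" using w by (simp add: words_def)
  have dec: "\<exists>u j r. j \<in> {0,1,2} \<and> j \<noteq> i \<and> w = u @ j # replicate r i" if i: "i \<in> {0,1,2}" for i
    using decomp[OF wS nonconst[OF cw i]] .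
  obtain u0 j0 r0 where d0: "j0 \<in> {0,1,2}" "j0 \<noteq> 0" "w = u0 @ j0 # replicate r0 0" using dec[of 0] by auto
  obtain u1 j1 r1 where d1: "j1 \<in> {0,1,2}" "j1 \<noteq> 1" "w = u1 @ j1 # replicate r1 1" using dec[of 1] by auto
  obtain u2 j2 r2 where d2: "j2 \<in> {0,1,2}" "j2 \<noteq> 2" "w = u2 @ j2 # replicate r2 2" using dec[of 2] by auto
  define n1 where "n1 = u1 @ 1 # replicate r1 j1"
  define n2 where "n2 = u2 @ 2 # replicate r2 j2"
  have i0: "(0::nat) \<in> {0,1,2}" and i1: "(1::nat) \<in> {0,1,2}" and i2: "(2::nat) \<in> {0,1,2}" by auto
  note E0 = Eset_geom[OF w i0 d0(1,2,3)]
  note E1 = Eset_geom[OF w i1 d1(1,2,3)]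
  note E2 = Eset_geom[OF w i2 d2(1,2,3)]
  note N1 = nb_facts[OF w i1 d1(1,2,3)]
  note N2 = nb_facts[OF w i2 d2(1,2,3)]
  have p: "sgFw q w (q k) \<in> cell q w" if "k \<in> {0,1,2}" for k using q_cell[OF that] .
  have B1: "Bset q w 0 0 1 = cell q w \<union> cell q n2"
    unfolding Bset_def n2_def using E0(1) E1(1) E2(2) p[OF i0] p[OF i1] by blast
  have B2: "Bset q w 0 1 1 = (cell q w \<union> cell q n1) \<union> cell q n2"
    unfolding Bset_def n1_def n2_def using E0(1) E1(2) E2(2) p[OF i0] by blast
  have n1w: "n1 \<in> words m" and n2w: "n2 \<in> words m" and wm: "w \<in> words m"
    using N1(1) N2(1) w unfolding n1_def n2_def m_def by auto
  have n1ne: "n1 \<noteq> w" and n2ne: "n2 \<noteq> w" using N1(2) N2(2) unfolding n1_def n2_def by auto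
  have n12: "n1 \<noteq> n2"
  proof
    assume eq: "n1 = n2"
    have "sgFw q w (q 1) \<in> cell q w \<inter> cell q n1" using N1(3) p[OF i1] unfolding n1_def by auto
    moreover have "sgFw q w (q 2) \<in> cell q w \<inter> cell q n1" using N2(3) p[OF i2] eq unfolding n2_def by auto
    moreover obtain pp where "cell q w \<inter> cell q n1 \<subseteq> {pp}" using cells_inter[OF wm n1w n1ne[symmetric]] by blast
    ultimately have "sgFw q w (q 1) = sgFw q w (q 2)" by blast
    then have "q 1 = q 2" by (rule sgFw_inj)
    then show False using q_inj[of 1 2] by simp
  qed
  have sub: "cell q v \<subseteq> SG q" if "v \<in> words m" for v using cell_sub that by (simp add: words_def)
  have ae_w2: "AE x in \<mu>. \<not> (x \<in> cell q w \<and> x \<in> cell q n2)" by (rule AE_cells[OF wm n2w n2ne[symmetric]])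
  have ae_w1: "AE x in \<mu>. \<not> (x \<in> cell q w \<and> x \<in> cell q n1)" by (rule AE_cells[OF wm n1w n1ne[symmetric]])
  have ae_12: "AE x in \<mu>. \<not> (x \<in> cell q n1 \<and> x \<in> cell q n2)" by (rule AE_cells[OF n1w n2w n12])
  have ae_3: "AE x in \<mu>. \<not> (x \<in> cell q w \<union> cell q n1 \<and> x \<in> cell q n2)"
    using ae_w2 ae_12 by eventually_elim auto
  have aeconv: "AE x in \<mu>. \<not> (x \<in> A \<and> x \<in> B) \<Longrightarrow> AE x in \<mu>. x \<notin> A \<or> x \<notin> B" for A B
    by (erule AE_mp) (intro AE_I2, auto)
  have fm: "A \<in> fmeasurable \<mu>" if "A \<in> sets \<mu>" for A using that P.fmeasurable_eq_sets by simp
  have mw: "measure \<mu> (cell q w) = (1/3)^m" and m1: "measure \<mu> (cell q n1) = (1/3)^m"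
    and m2: "measure \<mu> (cell q n2) = (1/3)^m" using meas_cell wm n1w n2w by auto
  have pw: "II h w + II h n2 = 2 * (1/3)^m * h (sgFw q w (q 2))"
    using pair_II[OF harm w i2 d2(1,2,3)] unfolding n2_def m_def .
  have pw1: "II h w + II h n1 = 2 * (1/3)^m * h (sgFw q w (q 1))"
    using pair_II[OF harm w i1 d1(1,2,3)] unfolding n1_def m_def .
  have Iw: "II h w = (1/3)^m * SS h w / 3" by (rule I_formula[OF harm wm])
  have cpos: "(1/3::real)^m > 0" by simp
  have int1: "(LINT x:Bset q w 0 0 1|\<mu>. h x) = II h w + II h n2"
    unfolding B1 II_def by (rule Un_int[OF hc cell_sets sub[OF wm] cell_sets sub[OF n2w] ae_w2])
  have meas1: "measure \<mu> (Bset q w 0 0 1) = 2 * (1/3)^m"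
    unfolding B1 using measure_Un_AE[OF aeconv[OF ae_w2] fm[OF cell_sets] fm[OF cell_sets]] mw m2 by simp
  have int2: "(LINT x:Bset q w 0 1 1|\<mu>. h x) = II h w + II h n1 + II h n2"
  proof -
    have "(LINT x:Bset q w 0 1 1|\<mu>. h x) = (LINT x:cell q w \<union> cell q n1|\<mu>. h x) + II h n2"
      unfolding B2 II_def using sub[OF wm] sub[OF n1w] cell_sets[of w] cell_sets[of n1]
      by (intro Un_int[OF hc _ _ cell_sets sub[OF n2w] ae_3]) auto
    also have "(LINT x:cell q w \<union> cell q n1|\<mu>. h x) = II h w + II h n1"
      unfolding II_def by (rule Un_int[OF hc cell_sets sub[OF wm] cell_sets sub[OF n1w] ae_w1])
    finally show ?thesis .
  qed
  have meas2: "measure \<mu> (Bset q w 0 1 1) = 3 * (1/3)^m"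
  proof -
    have "measure \<mu> (Bset q w 0 1 1) = measure \<mu> (cell q w \<union> cell q n1) + measure \<mu> (cell q n2)"
      unfolding B2 using cell_sets[of w] cell_sets[of n1]
      by (intro measure_Un_AE[OF aeconv[OF ae_3] fm fm[OF cell_sets]]) auto
    also have "measure \<mu> (cell q w \<union> cell q n1) = measure \<mu> (cell q w) + measure \<mu> (cell q n1)"
      by (rule measure_Un_AE[OF aeconv[OF ae_w1] fm[OF cell_sets] fm[OF cell_sets]])
    finally show ?thesis using mw m1 m2 by simp
  qed
  have r1: "mean_val \<mu> (Bset q w 0 0 1) h = h (sgFw q w (q 2))"
    unfolding mean_val_def int1 meas1 pw using cpos by simp
  have r2: "mean_val \<mu> (Bset q w 0 1 1) h =
           - (1/9) * h (sgFw q w (q 0)) + (5/9) * h (sgFw q w (q 1)) + (5/9) * h (sgFw q w (q 2))"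
  proof -
    have "II h w + II h n1 + II h n2 = (II h w + II h n1) + (II h w + II h n2) - II h w" by simp
    also have "\<dots> = 2 * (1/3)^m * h (sgFw q w (q 1)) + 2 * (1/3)^m * h (sgFw q w (q 2)) - (1/3)^m * SS h w / 3"
      unfolding pw pw1 by (simp add: Iw)
    also have "\<dots> = (1/3)^m * (2 * h (sgFw q w (q 1)) + 2 * h (sgFw q w (q 2)) - SS h w / 3)"
      by (simp add: algebra_simps)
    finally have e: "II h w + II h n1 + II h n2 = (1/3)^m * (2 * h (sgFw q w (q 1)) + 2 * h (sgFw q w (q 2)) - SS h w / 3)" .
    show ?thesis unfolding mean_val_def int2 meas2 e SS_def using cpos by (simp add: field_simps)
  qed
  show ?thesis using r1 r2 by blast
qed

end

theorem lemma3p3: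
  fixes q :: "nat \<Rightarrow> complex" and \<mu> :: "complex measure"
    and w :: "nat list" and h :: "complex \<Rightarrow> real"
  assumes "equilateral q"
    and "sg_measure q \<mu>"
    and "w \<in> words (length w)"
    and "cell q w \<inter> V0 q = {}"
    and "harmonic q h"
  shows "mean_val \<mu> (Bset q w 0 0 1) h = h (sgFw q w (q 2))
    \<and> mean_val \<mu> (Bset q w 0 1 1) h =
           - (1/9) * h (sgFw q w (q 0)) + (5/9) * h (sgFw q w (q 1)) + (5/9) * h (sgFw q w (q 2))"
proof -
  interpret SGm q \<mu> by (unfold_locales) (rule assms(1), rule assms(2))
  show ?thesis by (rule main_result[OF assms(3,4,5)])
qed



end
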